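(* In the setting below, suppose $I+M(n,m)$ is invertible for all $(n,m)\in\mathbb{Z}^2$. Then $w=c\,(I+M)^{-1}r$ satisfies the lattice potential KdV equation $$(p+q+w-\hat{\tilde w})(p-q+\hat w-\tilde w)=p^2-q^2\quad\text{for all }(n,m).$$
   Context: Setting: $p,q\in\mathbb{C}$; $\tilde f(n,m)=f(n+1,m)$, $\hat f(n,m)=f(n,m+1)$, $\hat{\tilde f}(n,m)=f(n+1,m+1)$. $\Gamma=\mathrm{Diag}(\mathrm{Diag}(k_1,\dots,k_{N_1}),\Gamma_J^{[N_2]}(\kappa_2),\dots,\Gamma_J^{[N_s]}(\kappa_s))$ with $\Gamma^{[N]}_J(\kappa)$ the $N\times N$ matrix with $\kappa$ on the diagonal and $1$ on the subdiagonal; all eigenvalues $\lambda,\mu$ of $\Gamma$ satisfy $\lambda+\mu\ne0$, and $p,q\notin\{\pm\lambda\}$. $c=(c^{(1)},\dots,c^{(s)})$ a constant row vector (block lengths $N_1,\dots,N_s$). With $\rho(k)=\big(\tfrac{p+k}{p-k}\big)^n\big(\tfrac{q+k}{q-k}\big)^m\rho^0$ and $\rho_i=\rho(k_i)$: $r=(\rho_1,\dots,\rho_{N_1},r_J(\kappa_2),\dots,r_J(\kappa_s))^T$, $r_J(\kappa)=(\partial_k^l\rho/l!|_{k=\kappa})_{l=0}^{N_j-1}$; $M=\mathcal{A}FGH$ where $F=\mathrm{Diag}(\rho_1,\dots,\rho_{N_1},F_J(\kappa_2),\dots)$ with $F_J(\kappa)$ lower triangular, $(i,j)$ entry $\partial_k^{i-j}\rho|_{\kappa}/(i-j)!$;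 $H=\mathrm{Diag}(c_1,\dots,c_{N_1},H_J(c^{(2)}),\dots)$ with $H_J(d)$ having $(i,j)$ entry $d_{i+j-1}$ if $i+j-1\le N_j$ else $0$; $G$ symmetric block matrix with $G_{1,1}=(1/(k_i+k_j))$, $G_{1,j}$ with $(l,t)$ entry $-(-1/(k_l+\kappa_j))^t$, $G_{i,j}$ ($1<i\le j$) with $(l,t)$ entry $\binom{l+t-2}{l-1}(-1)^{l+t}/(\kappa_i+\kappa_j)^{l+t-1}$; and $r$ is replaced by $\mathcal{A}r$, where $\mathcal{A}=\mathrm{Diag}(I_{N_1},\mathcal{A}_2,\dots,\mathcal{A}_s)$, each $\mathcal{A}_j$ a constant lower triangular Toeplitz matrix. *)

theory Defs
  imports "HOL-Analysis.Analysis" "Jordan_Normal_Form.Char_Poly"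
begin

(* The block list is  bl = [(k_1,1),...,(k_N1,1),(kappa_2,N_2),...,(kappa_s,N_s)]:
   the diagonal part Diag(k_1..k_N1) is viewed as N1 Jordan blocks of size 1
   (all formulas of the paper specialise correctly). *)

definition blocks :: "complex list \<Rightarrow> (complex \<times> nat) list \<Rightarrow> (complex \<times> nat) list" where
  "blocks ks js = map (\<lambda>k. (k, 1)) ks @ js"

definition dimN :: "complex list \<Rightarrow> (complex \<times> nat) list \<Rightarrow> nat" where
  "dimN ks js = sum_list (map snd (blocks ks js))"

(* bidx sizes i = (b, l): global (0-based) index i lies in block b at (0-based) local position l *)
fun bidx :: "nat list \<Rightarrow> nat \<Rightarrow> nat \<times> nat" where
  "bidx [] i = (0, i)"
| "bidx (s # ss) i = (if i < s then (0, i) else (case bidx ss (i - s) of (b, l) \<Rightarrow> (Suc b, l)))"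

definition blk :: "complex list \<Rightarrow> (complex \<times> nat) list \<Rightarrow> nat \<Rightarrow> nat" where
  "blk ks js i = fst (bidx (map snd (blocks ks js)) i)"

definition pos :: "complex list \<Rightarrow> (complex \<times> nat) list \<Rightarrow> nat \<Rightarrow> nat" where
  "pos ks js i = snd (bidx (map snd (blocks ks js)) i)"

definition eig :: "complex list \<Rightarrow> (complex \<times> nat) list \<Rightarrow> nat \<Rightarrow> complex" where
  "eig ks js b = fst (blocks ks js ! b)"

definition bsize :: "complex list \<Rightarrow> (complex \<times> nat) list \<Rightarrow> nat \<Rightarrow> nat" where
  "bsize ks js b = snd (blocks ks js ! b)"

definition rho :: "complex \<Rightarrow> complex \<Rightarrow> complex \<Rightarrow> int \<Rightarrow> int \<Rightarrow> complex \<Rightarrow> complex" where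
  "rho p q rho0 n m k = ((p + k) / (p - k)) powi n * ((q + k) / (q - k)) powi m * rho0"

definition drho :: "complex \<Rightarrow> complex \<Rightarrow> complex \<Rightarrow> int \<Rightarrow> int \<Rightarrow> nat \<Rightarrow> complex \<Rightarrow> complex" where
  "drho p q rho0 n m l kappa = (deriv ^^ l) (rho p q rho0 n m) kappa / of_nat (fact l)"

definition Gamma_mat :: "complex list \<Rightarrow> (complex \<times> nat) list \<Rightarrow> complex mat" where
  "Gamma_mat ks js = mat (dimN ks js) (dimN ks js) (\<lambda>(i, j).
     if blk ks js i = blk ks js j then
       (if pos ks js i = pos ks js j then eig ks js (blk ks js i)
        else if pos ks js i = Suc (pos ks js j) then 1 else 0)
     else 0)"

definition r_vec :: "complex \<Rightarrow> complex \<Rightarrow> complex \<Rightarrow> complex list \<Rightarrow> (complex \<times> nat) list \<Rightarrow> int \<Rightarrow> int \<Rightarrow> complex vec" where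
  "r_vec p q rho0 ks js n m = vec (dimN ks js) (\<lambda>i. drho p q rho0 n m (pos ks js i) (eig ks js (blk ks js i)))"

definition F_mat :: "complex \<Rightarrow> complex \<Rightarrow> complex \<Rightarrow> complex list \<Rightarrow> (complex \<times> nat) list \<Rightarrow> int \<Rightarrow> int \<Rightarrow> complex mat" where
  "F_mat p q rho0 ks js n m = mat (dimN ks js) (dimN ks js) (\<lambda>(i, j).
     if blk ks js i = blk ks js j \<and> pos ks js j \<le> pos ks js i
     then drho p q rho0 n m (pos ks js i - pos ks js j) (eig ks js (blk ks js i)) else 0)"

definition G_mat :: "complex list \<Rightarrow> (complex \<times> nat) list \<Rightarrow> complex mat" where
  "G_mat ks js = mat (dimN ks js) (dimN ks js) (\<lambda>(i, j).
     let l = pos ks js i; t = pos ks js j;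
         ka = eig ks js (blk ks js i); kb = eig ks js (blk ks js j)
     in of_nat ((l + t) choose l) * (-1) ^ (l + t) / (ka + kb) ^ (l + t + 1))"

definition H_mat :: "complex vec \<Rightarrow> complex list \<Rightarrow> (complex \<times> nat) list \<Rightarrow> complex mat" where
  "H_mat c ks js = mat (dimN ks js) (dimN ks js) (\<lambda>(i, j).
     if blk ks js i = blk ks js j \<and> pos ks js i + pos ks js j < bsize ks js (blk ks js i)
     then c $ ((i - pos ks js i) + (pos ks js i + pos ks js j)) else 0)"

(* A = Diag(I_N1, A_2, ..., A_s); A_j lower triangular Toeplitz with first column (a (j-2) 0, a (j-2) 1, ...) *)
definition A_mat :: "(nat \<Rightarrow> nat \<Rightarrow> complex) \<Rightarrow> complex list \<Rightarrow> (complex \<times> nat) list \<Rightarrow> complex mat" where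
  "A_mat a ks js = mat (dimN ks js) (dimN ks js) (\<lambda>(i, j).
     if blk ks js i = blk ks js j \<and> pos ks js j \<le> pos ks js i
     then (if blk ks js i < length ks then (if i = j then 1 else 0)
           else a (blk ks js i - length ks) (pos ks js i - pos ks js j))
     else 0)"

definition M_mat :: "complex \<Rightarrow> complex \<Rightarrow> complex \<Rightarrow> (nat \<Rightarrow> nat \<Rightarrow> complex) \<Rightarrow> complex vec \<Rightarrow> complex list \<Rightarrow> (complex \<times> nat) list \<Rightarrow> int \<Rightarrow> int \<Rightarrow> complex mat" where
  "M_mat p q rho0 a c ks js n m = A_mat a ks js * F_mat p q rho0 ks js n m * G_mat ks js * H_mat c ks js"

definition mat_inv :: "complex mat \<Rightarrow> complex mat" where
  "mat_inv X = (SOME B. B \<in> carrier_mat (dim_row X) (dim_row X) \<and> B * X = 1\<^sub>m (dim_row X) \<and> X * B = 1\<^sub>m (dim_row X))"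

definition w_fun :: "complex \<Rightarrow> complex \<Rightarrow> complex \<Rightarrow> (nat \<Rightarrow> nat \<Rightarrow> complex) \<Rightarrow> complex vec \<Rightarrow> complex list \<Rightarrow> (complex \<times> nat) list \<Rightarrow> int \<Rightarrow> int \<Rightarrow> complex" where
  "w_fun p q rho0 a c ks js n m =
     c \<bullet> (mat_inv (1\<^sub>m (dimN ks js) + M_mat p q rho0 a c ks js n m) *\<^sub>v (A_mat a ks js *\<^sub>v r_vec p q rho0 ks js n m))"

end

theory Submission imports Defs begin
no_notation vec_nth (infixl \<open>$\<close> 90)


lemma bidx_props:
  "i < sum_list ss \<Longrightarrow> fst (bidx ss i) < length ss \<and> snd (bidx ss i) < ss ! fst (bidx ss i)
     \<and> i = sum_list (take (fst (bidx ss i)) ss) + snd (bidx ss i)"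
proof (induction ss arbitrary: i)
  case Nil then show ?case by simp
next
  case (Cons s ss)
  show ?case
  proof (cases "i < s")
    case True then show ?thesis by simp
  next
    case False
    then have "i - s < sum_list ss" using Cons.prems by simp
    from Cons.IH[OF this] False show ?thesis
      by (auto split: prod.splits)
  qed
qed

lemma bidx_inv:
  "b < length ss \<Longrightarrow> l < ss ! b \<Longrightarrow> bidx ss (sum_list (take b ss) + l) = (b, l)"
proof (induction ss arbitrary: b)
  case Nil then show ?case by simp
next
  case (Cons s ss)
  show ?case
  proof (cases b)
    case 0 then show ?thesis using Cons.prems by simp
  next
    case (Suc b')
    then have "bidx ss (sum_list (take b' ss) + l) = (b', l)" using Cons by simp
    then show ?thesis using Suc by simp
  qed
qed

definition bstart :: "complex list \<Rightarrow> (complex \<times> nat) list \<Rightarrow> nat \<Rightarrow> nat" where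
  "bstart ks js b = sum_list (take b (map snd (blocks ks js)))"

definition nbl :: "complex list \<Rightarrow> (complex \<times> nat) list \<Rightarrow> nat" where
  "nbl ks js = length (blocks ks js)"

lemma blk_lt: "i < dimN ks js \<Longrightarrow> blk ks js i < nbl ks js"
  using bidx_props[of i "map snd (blocks ks js)"] by (simp add: dimN_def blk_def nbl_def)

lemma pos_lt: "i < dimN ks js \<Longrightarrow> pos ks js i < bsize ks js (blk ks js i)"
  using bidx_props[of i "map snd (blocks ks js)"] by (auto simp add: dimN_def blk_def pos_def bsize_def)

lemma idx_eq: "i < dimN ks js \<Longrightarrow> i = bstart ks js (blk ks js i) + pos ks js i"
  using bidx_props[of i "map snd (blocks ks js)"] by (simp add: dimN_def blk_def pos_def bstart_def)

lemma idx_inv: assumes "b < nbl ks js" "l < bsize ks js b"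
  shows "blk ks js (bstart ks js b + l) = b" "pos ks js (bstart ks js b + l) = l"
  using bidx_inv[of b "map snd (blocks ks js)" l] assms
  by (simp_all add: blk_def pos_def bstart_def nbl_def bsize_def)

lemma idx_bound: assumes "b < nbl ks js" "l < bsize ks js b"
  shows "bstart ks js b + l < dimN ks js"
proof -
  let ?ss = "map snd (blocks ks js)"
  have "sum_list (take (Suc b) ?ss) \<le> sum_list ?ss"
    by (metis append_take_drop_id le_add1 sum_list_append)
  moreover have "take (Suc b) ?ss = take b ?ss @ [?ss ! b]"
    using assms by (simp add: take_Suc_conv_app_nth nbl_def)
  ultimately show ?thesis using assms
    by (simp add: bstart_def dimN_def bsize_def nbl_def)
qed

lemma same_idx: assumes "i < dimN ks js" "j < dimN ks js" "blk ks js i = blk ks js j" "pos ks js i = pos ks js j"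
  shows "i = j"
  using idx_eq[OF assms(1)] idx_eq[OF assms(2)] assms(3,4) by simp

lemma prev_idx: assumes "i < dimN ks js" "0 < pos ks js i"
  shows "i - 1 < dimN ks js" "blk ks js (i - 1) = blk ks js i" "pos ks js (i - 1) = pos ks js i - 1"
proof -
  have e: "i - 1 = bstart ks js (blk ks js i) + (pos ks js i - 1)"
    using idx_eq[OF assms(1)] assms(2) by simp
  have b: "blk ks js i < nbl ks js" "pos ks js i - 1 < bsize ks js (blk ks js i)"
    using blk_lt[OF assms(1)] pos_lt[OF assms(1)] by auto
  show "i - 1 < dimN ks js" "blk ks js (i - 1) = blk ks js i" "pos ks js (i - 1) = pos ks js i - 1"
    unfolding e using idx_inv[OF b] idx_bound[OF b] by auto
qed

lemma pos_gt0: "i < dimN ks js \<Longrightarrow> 0 < pos ks js i \<Longrightarrow> 0 < i"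
  using idx_eq[of i ks js] by linarith

lemma next_idx: assumes "i < dimN ks js" "Suc (pos ks js i) < bsize ks js (blk ks js i)"
  shows "Suc i < dimN ks js" "blk ks js (Suc i) = blk ks js i" "pos ks js (Suc i) = Suc (pos ks js i)"
proof -
  have e: "Suc i = bstart ks js (blk ks js i) + Suc (pos ks js i)"
    using idx_eq[OF assms(1)] by simp
  have b: "blk ks js i < nbl ks js" "Suc (pos ks js i) < bsize ks js (blk ks js i)"
    using blk_lt[OF assms(1)] assms(2) by auto
  show "Suc i < dimN ks js" "blk ks js (Suc i) = blk ks js i" "pos ks js (Suc i) = Suc (pos ks js i)"
    unfolding e using idx_inv[OF b] idx_bound[OF b] by auto
qed

lemma block_sum: assumes "b < nbl ks js"
  shows "(\<Sum>j<dimN ks js. if blk ks js j = b then g j else 0) = (\<Sum>t<bsize ks js b. g (bstart ks js b + t))"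
proof -
  have "(\<Sum>j<dimN ks js. if blk ks js j = b then g j else 0) = (\<Sum>j\<in>{j. j < dimN ks js \<and> blk ks js j = b}. g j)"
    by (simp add: sum.If_cases Int_def conj_commute)
  also have "\<dots> = (\<Sum>t<bsize ks js b. g (bstart ks js b + t))"
  proof (rule sum.reindex_bij_witness[where j = "\<lambda>j. pos ks js j" and i = "\<lambda>t. bstart ks js b + t"])
    fix t assume "t \<in> {..<bsize ks js b}"
    then show "pos ks js (bstart ks js b + t) = t"
      "bstart ks js b + t \<in> {j. j < dimN ks js \<and> blk ks js j = b}"
      using idx_inv[OF assms] idx_bound[OF assms] by auto
  next
    fix j assume j: "j \<in> {j. j < dimN ks js \<and> blk ks js j = b}"
    then show "bstart ks js b + pos ks js j = j" "pos ks js j \<in> {..<bsize ks js b}"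
      using idx_eq pos_lt by force+
    then show "g (bstart ks js b + pos ks js j) = g j" by simp
  qed
  finally show ?thesis .
qed

lemma bsize_pos: assumes "\<forall>b \<in> set js. snd b \<ge> 1" "b < nbl ks js"
  shows "1 \<le> bsize ks js b"
  using assms unfolding bsize_def nbl_def blocks_def
  by (auto simp: nth_append)

lemma mult_entry: assumes "A \<in> carrier_mat nr n" "B \<in> carrier_mat n nc" "i < nr" "k < nc"
  shows "(A * B) $$ (i, k) = (\<Sum>j<n. A $$ (i, j) * B $$ (j, k))"
  using assms by (simp add: scalar_prod_def lessThan_atLeast0)

lemma mult_vec_entry: assumes "A \<in> carrier_mat nr n" "v \<in> carrier_vec n" "i < nr"
  shows "(A *\<^sub>v v) $ i = (\<Sum>j<n. A $$ (i, j) * v $ j)"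
  using assms by (simp add: scalar_prod_def lessThan_atLeast0)

lemma sum_two: assumes "(a::nat) < n" "P \<Longrightarrow> b < n \<and> b \<noteq> a"
  shows "(\<Sum>j<n. (if j = a then f j else if P \<and> j = b then g j else 0)) = f a + (if P then g b else 0)"
proof -
  have "(\<Sum>j<n. (if j = a then f j else if P \<and> j = b then g j else 0))
      = (\<Sum>j<n. (if j = a then f j else 0)) + (\<Sum>j<n. (if P \<and> j = b then g j else 0))"
    unfolding sum.distrib[symmetric] by (rule sum.cong) (use assms in auto)
  also have "\<dots> = f a + (if P then g b else 0)"
    using assms by (simp add: sum.delta')
  finally show ?thesis .
qed

context fixes ks :: "complex list" and js :: "(complex \<times> nat) list"
begin

abbreviation "N \<equiv> dimN ks js"
abbreviation "bk \<equiv> blk ks js"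
abbreviation "ps \<equiv> pos ks js"
abbreviation "bs \<equiv> bsize ks js"
abbreviation "ev \<equiv> eig ks js"
abbreviation "Gm \<equiv> Gamma_mat ks js"

lemma Gamma_carrier[simp]: "Gm \<in> carrier_mat N N"
  by (simp add: Gamma_mat_def)

lemma Gamma_dims[simp]: "dim_row Gm = N" "dim_col Gm = N"
  by (simp_all add: Gamma_mat_def)

lemma Gamma_entry: assumes "i < N" "j < N"
  shows "Gm $$ (i, j) = (if j = i then ev (bk i) else if 0 < ps i \<and> j = i - 1 then 1 else 0)"
proof -
  have A: "ps i = Suc (ps j) \<and> bk i = bk j \<longleftrightarrow> 0 < ps i \<and> j = i - 1"
  proof
    assume h: "ps i = Suc (ps j) \<and> bk i = bk j"
    then have "0 < ps i" by simp
    note pr = prev_idx[OF assms(1) this]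
    have "i - 1 = j"
      by (rule same_idx) (use assms h pr in auto)
    with h show "0 < ps i \<and> j = i - 1" by auto
  next
    assume "0 < ps i \<and> j = i - 1"
    then show "ps i = Suc (ps j) \<and> bk i = bk j" using prev_idx[OF assms(1)] by auto
  qed
  have B: "bk i = bk j \<and> ps i = ps j \<longleftrightarrow> i = j"
    using same_idx[OF assms] by auto
  have E: "Gm $$ (i, j) = (if bk i = bk j then (if ps i = ps j then ev (bk i) else if ps i = Suc (ps j) then 1 else 0) else 0)"
    using assms by (simp add: Gamma_mat_def)
  show ?thesis
  proof (cases "j = i")
    case True then show ?thesis using E by simp
  next
    case False
    then have "\<not> (bk i = bk j \<and> ps i = ps j)" using B by blast
    then have "Gm $$ (i, j) = (if ps i = Suc (ps j) \<and> bk i = bk j then 1 else 0)"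
      unfolding E by auto
    then show ?thesis using A False by simp
  qed
qed

lemma Gamma_entry': assumes "j < N" "k < N"
  shows "Gm $$ (j, k) = (if j = k then ev (bk k) else if Suc (ps k) < bs (bk k) \<and> j = Suc k then 1 else 0)"
proof -
  have "(0 < ps j \<and> k = j - 1) \<longleftrightarrow> (Suc (ps k) < bs (bk k) \<and> j = Suc k)"
  proof
    assume h: "0 < ps j \<and> k = j - 1"
    then show "Suc (ps k) < bs (bk k) \<and> j = Suc k"
      using prev_idx[OF assms(1)] pos_lt[OF assms(1)] idx_eq[OF assms(1)] by (cases j) auto
  next
    assume h: "Suc (ps k) < bs (bk k) \<and> j = Suc k"
    then show "0 < ps j \<and> k = j - 1" using next_idx[OF assms(2)] by auto
  qed
  then show ?thesis using Gamma_entry[OF assms] by auto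
qed

lemma Gamma_mult: assumes "X \<in> carrier_mat N nc" "i < N" "k < nc"
  shows "(Gm * X) $$ (i, k) = ev (bk i) * X $$ (i, k) + (if 0 < ps i then X $$ (i - 1, k) else 0)"
proof -
  have "(Gm * X) $$ (i, k) = (\<Sum>j<N. Gm $$ (i, j) * X $$ (j, k))"
    by (rule mult_entry[OF Gamma_carrier assms])
  also have "\<dots> = (\<Sum>j<N. (if j = i then ev (bk i) * X $$ (j, k) else if 0 < ps i \<and> j = i - 1 then X $$ (j, k) else 0))"
    by (rule sum.cong) (auto simp: Gamma_entry assms)
  also have "\<dots> = ev (bk i) * X $$ (i, k) + (if 0 < ps i then X $$ (i - 1, k) else 0)" by (rule sum_two) (use assms prev_idx[of i ks js] pos_gt0[of i ks js] prev_idx[of k ks js] pos_gt0[of k ks js] in auto)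
  finally show ?thesis .
qed

lemma Gamma_mult_vec: assumes "v \<in> carrier_vec N" "i < N"
  shows "(Gm *\<^sub>v v) $ i = ev (bk i) * v $ i + (if 0 < ps i then v $ (i - 1) else 0)"
proof -
  have "(Gm *\<^sub>v v) $ i = (\<Sum>j<N. Gm $$ (i, j) * v $ j)"
    by (rule mult_vec_entry[OF Gamma_carrier assms])
  also have "\<dots> = (\<Sum>j<N. (if j = i then ev (bk i) * v $ j else if 0 < ps i \<and> j = i - 1 then v $ j else 0))"
    by (rule sum.cong) (auto simp: Gamma_entry assms)
  also have "\<dots> = ev (bk i) * v $ i + (if 0 < ps i then v $ (i - 1) else 0)" by (rule sum_two) (use assms prev_idx[of i ks js] pos_gt0[of i ks js] prev_idx[of k ks js] pos_gt0[of k ks js] in auto)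
  finally show ?thesis .
qed

lemma mult_Gamma: assumes "X \<in> carrier_mat nr N" "i < nr" "k < N"
  shows "(X * Gm) $$ (i, k) = X $$ (i, k) * ev (bk k) + (if Suc (ps k) < bs (bk k) then X $$ (i, Suc k) else 0)"
proof -
  have "(X * Gm) $$ (i, k) = (\<Sum>j<N. X $$ (i, j) * Gm $$ (j, k))"
    by (rule mult_entry[OF assms(1) Gamma_carrier assms(2,3)])
  also have "\<dots> = (\<Sum>j<N. (if j = k then X $$ (i, j) * ev (bk k) else if Suc (ps k) < bs (bk k) \<and> j = Suc k then X $$ (i, j) else 0))"
    by (rule sum.cong) (auto simp: Gamma_entry' assms)
  also have "\<dots> = X $$ (i, k) * ev (bk k) + (if Suc (ps k) < bs (bk k) then X $$ (i, Suc k) else 0)" by (rule sum_two) (use assms next_idx in auto)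
  finally show ?thesis .
qed

lemma mult_GammaT: assumes "X \<in> carrier_mat nr N" "i < nr" "k < N"
  shows "(X * Gm\<^sup>T) $$ (i, k) = X $$ (i, k) * ev (bk k) + (if 0 < ps k then X $$ (i, k - 1) else 0)"
proof -
  have "(X * Gm\<^sup>T) $$ (i, k) = (\<Sum>j<N. X $$ (i, j) * Gm $$ (k, j))"
    using mult_entry[OF assms(1) _ assms(2,3), of "Gm\<^sup>T"] by (auto simp: assms intro!: sum.cong)
  also have "\<dots> = (\<Sum>j<N. (if j = k then X $$ (i, j) * ev (bk k) else if 0 < ps k \<and> j = k - 1 then X $$ (i, j) else 0))"
    by (rule sum.cong) (auto simp: Gamma_entry assms)
  also have "\<dots> = X $$ (i, k) * ev (bk k) + (if 0 < ps k then X $$ (i, k - 1) else 0)" by (rule sum_two) (use assms prev_idx[of i ks js] pos_gt0[of i ks js] prev_idx[of k ks js] pos_gt0[of k ks js] in auto)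
  finally show ?thesis .
qed

lemma GammaT_mult: assumes "X \<in> carrier_mat N nc" "i < N" "k < nc"
  shows "(Gm\<^sup>T * X) $$ (i, k) = ev (bk i) * X $$ (i, k) + (if Suc (ps i) < bs (bk i) then X $$ (Suc i, k) else 0)"
proof -
  have "(Gm\<^sup>T * X) $$ (i, k) = (\<Sum>j<N. Gm $$ (j, i) * X $$ (j, k))"
    using mult_entry[OF _ assms(1) assms(2,3), of "Gm\<^sup>T"] by (auto simp: assms intro!: sum.cong)
  also have "\<dots> = (\<Sum>j<N. (if j = i then ev (bk i) * X $$ (j, k) else if Suc (ps i) < bs (bk i) \<and> j = Suc i then X $$ (j, k) else 0))"
    by (rule sum.cong) (auto simp: Gamma_entry' assms)
  also have "\<dots> = ev (bk i) * X $$ (i, k) + (if Suc (ps i) < bs (bk i) then X $$ (Suc i, k) else 0)" by (rule sum_two) (use assms next_idx in auto)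
  finally show ?thesis .
qed


definition toep :: "(nat \<Rightarrow> nat \<Rightarrow> complex) \<Rightarrow> complex mat" where
  "toep f = mat N N (\<lambda>(i, k). if bk i = bk k \<and> ps k \<le> ps i then f (bk i) (ps i - ps k) else 0)"

definition hank :: "(nat \<Rightarrow> nat \<Rightarrow> complex) \<Rightarrow> complex mat" where
  "hank h = mat N N (\<lambda>(i, k). if bk i = bk k \<and> ps i + ps k < bs (bk i) then h (bk i) (ps i + ps k) else 0)"

lemma toep_carrier[simp]: "toep f \<in> carrier_mat N N" by (simp add: toep_def)
lemma hank_carrier[simp]: "hank h \<in> carrier_mat N N" by (simp add: hank_def)
lemma toep_dims[simp]: "dim_row (toep f) = N" "dim_col (toep f) = N" by (simp_all add: toep_def)
lemma hank_dims[simp]: "dim_row (hank h) = N" "dim_col (hank h) = N" by (simp_all add: hank_def)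

lemma toep_entry: "i < N \<Longrightarrow> k < N \<Longrightarrow> toep f $$ (i, k) =
   (if bk i = bk k \<and> ps k \<le> ps i then f (bk i) (ps i - ps k) else 0)"
  by (simp add: toep_def)

lemma hank_entry: "i < N \<Longrightarrow> k < N \<Longrightarrow> hank h $$ (i, k) =
   (if bk i = bk k \<and> ps i + ps k < bs (bk i) then h (bk i) (ps i + ps k) else 0)"
  by (simp add: hank_def)

lemma toep_comm: "Gm * toep f = toep f * Gm"
proof (rule eq_matI)
  fix i k assume ik: "i < dim_row (toep f * Gm)" "k < dim_col (toep f * Gm)"
  then have i: "i < N" and k: "k < N" by auto
  have L: "(Gm * toep f) $$ (i, k) = ev (bk i) * toep f $$ (i, k) + (if 0 < ps i then toep f $$ (i - 1, k) else 0)"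
    by (rule Gamma_mult[OF toep_carrier i k])
  have R: "(toep f * Gm) $$ (i, k) = toep f $$ (i, k) * ev (bk k) + (if Suc (ps k) < bs (bk k) then toep f $$ (i, Suc k) else 0)"
    by (rule mult_Gamma[OF toep_carrier i k])
  have X: "(if 0 < ps i then toep f $$ (i - 1, k) else 0) = (if Suc (ps k) < bs (bk k) then toep f $$ (i, Suc k) else 0)"
  proof (cases "bk i = bk k \<and> ps k < ps i")
    case True
    then have "Suc (ps k) < bs (bk k)" using pos_lt[OF i] by auto
    with True show ?thesis using prev_idx[OF i] next_idx[OF k] i k
      by (auto simp: toep_entry)
  next
    case False
    have a: "0 < ps i \<Longrightarrow> toep f $$ (i - 1, k) = 0"
      using prev_idx[OF i] False k by (auto simp: toep_entry)
    have b: "Suc (ps k) < bs (bk k) \<Longrightarrow> toep f $$ (i, Suc k) = 0"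
      using next_idx[OF k] False i by (auto simp: toep_entry)
    show ?thesis using a b by simp
  qed
  have Y: "ev (bk i) * toep f $$ (i, k) = toep f $$ (i, k) * ev (bk k)"
    using i k by (auto simp: toep_entry)
  show "(Gm * toep f) $$ (i, k) = (toep f * Gm) $$ (i, k)"
    unfolding L R X Y ..
qed (auto)

lemma hank_Gamma: "hank h * Gm = Gm\<^sup>T * hank h"
proof (rule eq_matI)
  fix i k assume ik: "i < dim_row (Gm\<^sup>T * hank h)" "k < dim_col (Gm\<^sup>T * hank h)"
  then have i: "i < N" and k: "k < N" by auto
  have L: "(hank h * Gm) $$ (i, k) = hank h $$ (i, k) * ev (bk k) + (if Suc (ps k) < bs (bk k) then hank h $$ (i, Suc k) else 0)"
    by (rule mult_Gamma[OF hank_carrier i k])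
  have R: "(Gm\<^sup>T * hank h) $$ (i, k) = ev (bk i) * hank h $$ (i, k) + (if Suc (ps i) < bs (bk i) then hank h $$ (Suc i, k) else 0)"
    by (rule GammaT_mult[OF hank_carrier i k])
  have X: "(if Suc (ps k) < bs (bk k) then hank h $$ (i, Suc k) else 0) = (if Suc (ps i) < bs (bk i) then hank h $$ (Suc i, k) else 0)"
  proof (cases "bk i = bk k \<and> Suc (ps i + ps k) < bs (bk i)")
    case True
    then have "Suc (ps k) < bs (bk k)" "Suc (ps i) < bs (bk i)" by auto
    with True show ?thesis using next_idx[OF i] next_idx[OF k] i k
      by (auto simp: hank_entry)
  next
    case False
    have a: "Suc (ps k) < bs (bk k) \<Longrightarrow> hank h $$ (i, Suc k) = 0"
      using next_idx[OF k] False i by (auto simp: hank_entry)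
    have b: "Suc (ps i) < bs (bk i) \<Longrightarrow> hank h $$ (Suc i, k) = 0"
      using next_idx[OF i] False k by (auto simp: hank_entry)
    show ?thesis using a b by simp
  qed
  have Y: "hank h $$ (i, k) * ev (bk k) = ev (bk i) * hank h $$ (i, k)"
    using i k by (auto simp: hank_entry)
  show "(hank h * Gm) $$ (i, k) = (Gm\<^sup>T * hank h) $$ (i, k)"
    unfolding L R X Y ..
qed (auto)

lemma hank_sym: "(hank h)\<^sup>T = hank h"
  by (rule eq_matI) (auto simp: hank_entry add.commute)

lemma sum_shift_filter:
  fixes g :: "nat \<Rightarrow> complex"
  shows "(\<Sum>t<B. if a + t < B \<and> c \<le> t then g t else 0) =
         (if a + c < B then (\<Sum>s<B - (a + c). g (c + s)) else 0)"
proof -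
  have "(\<Sum>t<B. if a + t < B \<and> c \<le> t then g t else 0) = (\<Sum>t\<in>{c..<B - a}. g t)"
    by (rule sum.mono_neutral_cong_right) auto
  also have "\<dots> = (\<Sum>s<B - a - c. g (c + s))"
  proof -
    have "{c..<B - a} = (\<lambda>s. c + s) ` {..<B - a - c}"
    proof (auto simp: image_iff)
      fix x assume "c \<le> x" "x < B - a"
      then show "\<exists>xa\<in>{..<B - (a + c)}. x = c + xa" by (intro bexI[of _ "x - c"]) auto
    qed
    then show ?thesis by (simp add: sum.reindex inj_on_def)
  qed
  finally show ?thesis by (auto simp: algebra_simps)
qed

lemma hank_toep: "hank h * toep f = hank (\<lambda>b d. \<Sum>s<bs b - d. h b (d + s) * f b s)"
proof (rule eq_matI)
  fix i k assume ik: "i < dim_row (hank (\<lambda>b d. \<Sum>s<bs b - d. h b (d + s) * f b s))"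
     "k < dim_col (hank (\<lambda>b d. \<Sum>s<bs b - d. h b (d + s) * f b s))"
  then have i: "i < N" and k: "k < N" by simp_all
  have "(hank h * toep f) $$ (i, k) = (\<Sum>j<N. hank h $$ (i, j) * toep f $$ (j, k))"
    by (rule mult_entry[OF hank_carrier toep_carrier i k])
  also have "\<dots> = (if bk i = bk k then (\<Sum>j<N. if bk j = bk i then
        (if ps i + ps j < bs (bk i) \<and> ps k \<le> ps j then h (bk i) (ps i + ps j) * f (bk i) (ps j - ps k) else 0) else 0) else 0)"
  proof (cases "bk i = bk k")
    case True then show ?thesis using i k by (auto intro!: sum.cong simp: hank_entry toep_entry)
  next
    case False then show ?thesis using i k by (auto intro!: sum.neutral simp: hank_entry toep_entry)
  qed
  also have "\<dots> = (if bk i = bk k then (\<Sum>t<bs (bk i). 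
        (if ps i + t < bs (bk i) \<and> ps k \<le> t then h (bk i) (ps i + t) * f (bk i) (t - ps k) else 0)) else 0)"
  proof (cases "bk i = bk k")
    case True
    let ?g = "\<lambda>j. if ps i + ps j < bs (bk i) \<and> ps k \<le> ps j then h (bk i) (ps i + ps j) * f (bk i) (ps j - ps k) else 0"
    have "(\<Sum>j<N. if bk j = bk i then ?g j else 0) = (\<Sum>t<bs (bk i). ?g (bstart ks js (bk i) + t))"
      by (rule block_sum[OF blk_lt[OF i]])
    also have "\<dots> = (\<Sum>t<bs (bk i). 
        (if ps i + t < bs (bk i) \<and> ps k \<le> t then h (bk i) (ps i + t) * f (bk i) (t - ps k) else 0))"
      by (rule sum.cong) (simp_all add: idx_inv[OF blk_lt[OF i]])
    finally show ?thesis using True by simp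
  qed simp
  also have "\<dots> = (if bk i = bk k then (if ps i + ps k < bs (bk i) then
        (\<Sum>s<bs (bk i) - (ps i + ps k). h (bk i) (ps i + (ps k + s)) * f (bk i) s) else 0) else 0)"
    by (simp add: sum_shift_filter)
  also have "\<dots> = hank (\<lambda>b d. \<Sum>s<bs b - d. h b (d + s) * f b s) $$ (i, k)"
    using i k by (simp add: hank_entry add.assoc)
  finally show "(hank h * toep f) $$ (i, k) = hank (\<lambda>b d. \<Sum>s<bs b - d. h b (d + s) * f b s) $$ (i, k)" .
qed (auto)


definition gfun :: "complex \<Rightarrow> complex \<Rightarrow> nat \<Rightarrow> nat \<Rightarrow> complex" where
  "gfun a b l t = of_nat ((l + t) choose l) * (-1) ^ (l + t) / (a + b) ^ (l + t + 1)"

lemma choose_sym: "(l + t) choose t = (l + t) choose l"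
  using binomial_symmetric[of t "l + t"] by simp

lemma mult_div_cancel_aux: "(z::complex) \<noteq> 0 \<Longrightarrow> z * (c / (z * y)) = c / y"
  by (cases "y = 0") (simp_all add: field_simps)

lemma gfun_identity: assumes ab: "a + b \<noteq> 0"
  shows "(a + b) * gfun a b l t + (if 0 < l then gfun a b (l - 1) t else 0) + (if 0 < t then gfun a b l (t - 1) else 0)
        = (if l = 0 \<and> t = 0 then 1 else 0)"
proof (cases l)
  case 0
  show ?thesis
  proof (cases t)
    case 0 with \<open>l = 0\<close> ab show ?thesis by (simp add: gfun_def)
  next
    case (Suc t')
    have "(a + b) * gfun a b 0 (Suc t') = (a + b) * (- ((-1) ^ t') / ((a + b) * (a + b) ^ (t' + 1)))"
      by (simp add: gfun_def)
    also have "\<dots> = - ((-1) ^ t' / (a + b) ^ (t' + 1))"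
      using mult_div_cancel_aux[OF ab] by simp
    finally have "(a + b) * gfun a b 0 (Suc t') = - ((-1) ^ t' / (a + b) ^ (t' + 1))" .
    moreover have "gfun a b 0 t' = (-1) ^ t' / (a + b) ^ (t' + 1)"
      by (simp add: gfun_def)
    ultimately show ?thesis using \<open>l = 0\<close> Suc by simp
  qed
next
  case (Suc l')
  show ?thesis
  proof (cases t)
    case 0
    have "(a + b) * gfun a b (Suc l') 0 = (a + b) * (- ((-1) ^ l') / ((a + b) * (a + b) ^ (l' + 1)))"
      by (simp add: gfun_def)
    also have "\<dots> = - ((-1) ^ l' / (a + b) ^ (l' + 1))"
      using mult_div_cancel_aux[OF ab] by simp
    finally have "(a + b) * gfun a b (Suc l') 0 = - ((-1) ^ l' / (a + b) ^ (l' + 1))" .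
    moreover have "gfun a b l' 0 = (-1) ^ l' / (a + b) ^ (l' + 1)"
      by (simp add: gfun_def)
    ultimately show ?thesis using Suc 0 by simp
  next
    case (Suc t')
    define n where "n = l' + t' + 1"
    define D where "D = (-1) ^ n / (a + b) ^ (n + 1)"
    have c: "(n + 1) choose (Suc l') = (n choose l') + (n choose (Suc l'))"
      by (simp add: n_def)
    have "(a + b) * gfun a b (Suc l') (Suc t') = (a + b) * (- (of_nat ((n + 1) choose (Suc l')) * (-1) ^ n) / ((a + b) * (a + b) ^ (n + 1)))"
      by (simp add: gfun_def n_def)
    also have "\<dots> = - (of_nat ((n + 1) choose (Suc l')) * D)"
      using mult_div_cancel_aux[OF ab] by (simp add: D_def)
    finally have e1: "(a + b) * gfun a b (Suc l') (Suc t') = - (of_nat ((n + 1) choose (Suc l')) * D)" .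
    have e2: "gfun a b l' (Suc t') = of_nat (n choose l') * D"
      by (simp add: gfun_def D_def n_def)
    have e3: "gfun a b (Suc l') t' = of_nat (n choose (Suc l')) * D"
      by (simp add: gfun_def D_def n_def)
    show ?thesis using \<open>l = Suc l'\<close> Suc e1 e2 e3 c by (simp add: algebra_simps)
  qed
qed

lemma G_entry: "i < N \<Longrightarrow> k < N \<Longrightarrow> G_mat ks js $$ (i, k) = gfun (ev (bk i)) (ev (bk k)) (ps i) (ps k)"
  by (simp add: G_mat_def gfun_def Let_def)

lemma G_carrier[simp]: "G_mat ks js \<in> carrier_mat N N" by (simp add: G_mat_def)
lemma G_dims[simp]: "dim_row (G_mat ks js) = N" "dim_col (G_mat ks js) = N" by (simp_all add: G_mat_def)

lemma G_sym: "(G_mat ks js)\<^sup>T = G_mat ks js"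
proof (rule eq_matI)
  fix i k assume "i < dim_row (G_mat ks js)" "k < dim_col (G_mat ks js)"
  then show "(G_mat ks js)\<^sup>T $$ (i, k) = G_mat ks js $$ (i, k)"
    using choose_sym[of "ps i" "ps k"] by (simp add: G_entry gfun_def add.commute)
qed auto

definition Emat :: "complex mat" where
  "Emat = mat N N (\<lambda>(i, k). if ps i = 0 \<and> ps k = 0 then 1 else 0)"

lemma G_sylvester: assumes ne: "\<And>i k. i < N \<Longrightarrow> k < N \<Longrightarrow> ev (bk i) + ev (bk k) \<noteq> 0"
  shows "Gm * G_mat ks js + G_mat ks js * Gm\<^sup>T = Emat"
proof (rule eq_matI)
  fix i k assume "i < dim_row Emat" "k < dim_col Emat"
  then have i: "i < N" and k: "k < N" by (simp_all add: Emat_def)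
  let ?a = "ev (bk i)" and ?b = "ev (bk k)"
  have L: "(Gm * G_mat ks js) $$ (i, k) = ?a * gfun ?a ?b (ps i) (ps k) + (if 0 < ps i then gfun ?a ?b (ps i - 1) (ps k) else 0)"
    using Gamma_mult[OF G_carrier i k] prev_idx[OF i] i k by (auto simp: G_entry)
  have R: "(G_mat ks js * Gm\<^sup>T) $$ (i, k) = gfun ?a ?b (ps i) (ps k) * ?b + (if 0 < ps k then gfun ?a ?b (ps i) (ps k - 1) else 0)"
    using mult_GammaT[OF G_carrier i k] prev_idx[OF k] i k by (auto simp: G_entry)
  have "(Gm * G_mat ks js + G_mat ks js * Gm\<^sup>T) $$ (i, k) = (Gm * G_mat ks js) $$ (i, k) + (G_mat ks js * Gm\<^sup>T) $$ (i, k)"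
    using i k by simp
  also have "\<dots> = (?a + ?b) * gfun ?a ?b (ps i) (ps k) + (if 0 < ps i then gfun ?a ?b (ps i - 1) (ps k) else 0)
       + (if 0 < ps k then gfun ?a ?b (ps i) (ps k - 1) else 0)"
    unfolding L R by (simp add: algebra_simps)
  also have "\<dots> = Emat $$ (i, k)"
    using gfun_identity[OF ne[OF i k]] i k by (simp add: Emat_def)
  finally show "(Gm * G_mat ks js + G_mat ks js * Gm\<^sup>T) $$ (i, k) = Emat $$ (i, k)" .
qed (auto simp: Emat_def)


lemma bsize_ks: "b < length ks \<Longrightarrow> bs b = 1"
  by (simp add: bsize_def blocks_def nth_append)

lemma nbl_ks: "length ks \<le> nbl ks js"
  by (simp add: nbl_def blocks_def)

lemma A_toep: "A_mat a ks js = toep (\<lambda>b d. if b < length ks then (if d = 0 then 1 else 0) else a (b - length ks) d)"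
proof (rule eq_matI)
  fix i k assume "i < dim_row (toep (\<lambda>b d. if b < length ks then (if d = 0 then 1 else 0) else a (b - length ks) d))"
    "k < dim_col (toep (\<lambda>b d. if b < length ks then (if d = 0 then 1 else 0) else a (b - length ks) d))"
  then have i: "i < N" and k: "k < N" by simp_all
  show "A_mat a ks js $$ (i, k) = toep (\<lambda>b d. if b < length ks then (if d = 0 then 1 else 0) else a (b - length ks) d) $$ (i, k)"
  proof (cases "bk i = bk k \<and> ps k \<le> ps i \<and> bk i < length ks")
    case True
    then have "ps i = 0" "ps k = 0" using pos_lt[OF i] pos_lt[OF k] bsize_ks[of "bk i"] by auto
    then have "i = k" using same_idx[OF i k] True by auto
    then show ?thesis using True i k \<open>ps i = 0\<close> by (simp add: A_mat_def toep_entry)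
  next
    case False
    then show ?thesis using i k by (auto simp: A_mat_def toep_entry)
  qed
qed (simp_all add: A_mat_def)

lemma F_toep: "F_mat p q rho0 ks js n m = toep (\<lambda>b d. drho p q rho0 n m d (ev b))"
  by (simp add: F_mat_def toep_def)

lemma H_hank: "H_mat c ks js = hank (\<lambda>b d. c $ (bstart ks js b + d))"
proof (rule eq_matI)
  fix i k assume "i < dim_row (hank (\<lambda>b d. c $ (bstart ks js b + d)))" "k < dim_col (hank (\<lambda>b d. c $ (bstart ks js b + d)))"
  then have i: "i < N" and k: "k < N" by simp_all
  have "i - ps i = bstart ks js (bk i)" using idx_eq[OF i] by linarith
  then show "H_mat c ks js $$ (i, k) = hank (\<lambda>b d. c $ (bstart ks js b + d)) $$ (i, k)"
    using i k by (cases "bk i = bk k") (simp_all add: H_mat_def hank_entry)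
qed (simp_all add: H_mat_def)

definition evec :: "complex vec" where
  "evec = vec N (\<lambda>i. if ps i = 0 then 1 else 0)"

lemma evec_carrier[simp]: "evec \<in> carrier_vec N" by (simp add: evec_def)
lemma evec_dim[simp]: "dim_vec evec = N" by (simp add: evec_def)

lemma Emat_evec: "Emat = mat N N (\<lambda>(i, k). evec $ i * evec $ k)"
  by (rule eq_matI) (auto simp: Emat_def evec_def)

lemma start_sum: assumes i: "i < N"
  shows "(\<Sum>j<N. (if bk j = bk i \<and> ps j = 0 then g j else 0)) = g (bstart ks js (bk i))"
proof -
  have b: "bk i < nbl ks js" "0 < bs (bk i)" using blk_lt[OF i] pos_lt[OF i] by auto
  have "(\<Sum>j<N. (if bk j = bk i \<and> ps j = 0 then g j else 0)) = (\<Sum>j<N. (if j = bstart ks js (bk i) then g j else 0))"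
  proof (rule sum.cong)
    fix j assume "j \<in> {..<N}"
    then have j: "j < N" by simp
    have "(bk j = bk i \<and> ps j = 0) \<longleftrightarrow> j = bstart ks js (bk i)"
      using idx_eq[OF j] idx_inv[OF b(1), of 0] b by (auto simp del: add_0_right)
    then show "(if bk j = bk i \<and> ps j = 0 then g j else 0) = (if j = bstart ks js (bk i) then g j else 0)" by simp
  qed simp
  also have "\<dots> = g (bstart ks js (bk i))"
    using idx_bound[OF b(1), of 0] b by (simp add: sum.delta')
  finally show ?thesis .
qed

lemma toep_evec: "toep f *\<^sub>v evec = vec N (\<lambda>i. f (bk i) (ps i))"
proof (rule eq_vecI)
  fix i assume "i < dim_vec (vec N (\<lambda>i. f (bk i) (ps i)))"
  then have i: "i < N" by simp
  have b: "bk i < nbl ks js" "0 < bs (bk i)" using blk_lt[OF i] pos_lt[OF i] by auto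
  have "(toep f *\<^sub>v evec) $ i = (\<Sum>j<N. toep f $$ (i, j) * evec $ j)"
    by (rule mult_vec_entry[OF toep_carrier evec_carrier i])
  also have "\<dots> = (\<Sum>j<N. (if bk j = bk i \<and> ps j = 0 then f (bk i) (ps i - ps j) else 0))"
    by (rule sum.cong) (auto simp: toep_entry evec_def i)
  also have "\<dots> = f (bk i) (ps i - ps (bstart ks js (bk i)))"
    by (rule start_sum[OF i])
  also have "\<dots> = f (bk i) (ps i)"
    using idx_inv(2)[OF b(1), of 0] b by simp
  finally show "(toep f *\<^sub>v evec) $ i = vec N (\<lambda>i. f (bk i) (ps i)) $ i" using i by simp
qed simp

lemma hank_evec: assumes "\<forall>b \<in> set js. snd b \<ge> 1"
  shows "hank h *\<^sub>v evec = vec N (\<lambda>i. h (bk i) (ps i))"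
proof (rule eq_vecI)
  fix i assume "i < dim_vec (vec N (\<lambda>i. h (bk i) (ps i)))"
  then have i: "i < N" by simp
  have b: "bk i < nbl ks js" "0 < bs (bk i)" using blk_lt[OF i] pos_lt[OF i] by auto
  have "(hank h *\<^sub>v evec) $ i = (\<Sum>j<N. hank h $$ (i, j) * evec $ j)"
    by (rule mult_vec_entry[OF hank_carrier evec_carrier i])
  also have "\<dots> = (\<Sum>j<N. (if bk j = bk i \<and> ps j = 0 then h (bk i) (ps i + ps j) else 0))"
    by (rule sum.cong) (use pos_lt[OF i] in \<open>auto simp: hank_entry evec_def i\<close>)
  also have "\<dots> = h (bk i) (ps i + ps (bstart ks js (bk i)))"
    by (rule start_sum[OF i])
  also have "\<dots> = h (bk i) (ps i)"
    using idx_inv(2)[OF b(1), of 0] b by simp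
  finally show "(hank h *\<^sub>v evec) $ i = vec N (\<lambda>i. h (bk i) (ps i)) $ i" using i by simp
qed simp

lemma r_toep: "r_vec p q rho0 ks js n m = F_mat p q rho0 ks js n m *\<^sub>v evec"
  unfolding F_toep toep_evec by (simp add: r_vec_def)

lemma c_hank: assumes "\<forall>b \<in> set js. snd b \<ge> 1" "dim_vec c = N"
  shows "c = H_mat c ks js *\<^sub>v evec"
proof -
  have "vec N (\<lambda>i. c $ (bstart ks js (bk i) + ps i)) = c"
    using assms(2) idx_eq by (auto intro!: eq_vecI) 
  then show ?thesis unfolding H_hank hank_evec[OF assms(1)] by simp
qed

lemma eig_eigenvalue: assumes i: "i < N" shows "eigenvalue Gm (ev (bk i))"
proof -
  define b where "b = bk i"
  have b: "b < nbl ks js" "bs b - 1 < bs b" using blk_lt[OF i] pos_lt[OF i] by (auto simp: b_def)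
  define j where "j = bstart ks js b + (bs b - 1)"
  have j: "j < N" "bk j = b" "ps j = bs b - 1"
    using idx_bound[OF b] idx_inv[OF b] by (simp_all add: j_def)
  define v where "v = (unit_vec N j :: complex vec)"
  have "Gm *\<^sub>v v = ev b \<cdot>\<^sub>v v"
  proof (rule eq_vecI)
    fix t assume "t < dim_vec (ev b \<cdot>\<^sub>v v)"
    then have t: "t < N" by (simp add: v_def)
    have "(if 0 < ps t then v $ (t - 1) else 0) = 0"
    proof (cases "0 < ps t \<and> t - 1 = j")
      case True
      then have "bk t = b" "ps t = bs b" using prev_idx[OF t] j b(2) by auto
      then show ?thesis using pos_lt[OF t] by simp
    next
      case False
      then show ?thesis using prev_idx[OF t] j(1) by (auto simp: v_def)
    qed
    moreover have vt: "v $ t = (if t = j then 1 else 0)" using t j by (simp add: v_def)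
    moreover have "v \<in> carrier_vec N" by (simp add: v_def)
    ultimately show "(Gm *\<^sub>v v) $ t = (ev b \<cdot>\<^sub>v v) $ t"
      using Gamma_mult_vec[of v t] t j by (auto simp: v_def[symmetric])
  qed (simp add: v_def)
  moreover have "v \<in> carrier_vec N" "v \<noteq> 0\<^sub>v N"
    using j by (auto simp: v_def dest!: arg_cong[where f = "\<lambda>x. x $ j"])
  ultimately show ?thesis unfolding eigenvalue_def eigenvector_def b_def by auto
qed

lemma toep_prev: assumes "i < N" "k < N"
  shows "(if 0 < ps i then toep f $$ (i - 1, k) else 0) =
    (if bk i = bk k \<and> ps k \<le> ps i then (if ps i - ps k = 0 then 0 else f (bk i) (ps i - ps k - 1)) else 0)"
  using assms prev_idx[OF assms(1)] by (auto simp: toep_entry)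

lemma toep_shift:
  assumes sh: "\<And>i d. i < N \<Longrightarrow> (c - ev (bk i)) * f1 (bk i) d - (if d = 0 then 0 else f1 (bk i) (d - 1))
       = (c + ev (bk i)) * f0 (bk i) d + (if d = 0 then 0 else f0 (bk i) (d - 1))"
  shows "c \<cdot>\<^sub>m toep f1 - Gm * toep f1 = c \<cdot>\<^sub>m toep f0 + Gm * toep f0"
proof (rule eq_matI)
  fix i k assume "i < dim_row (c \<cdot>\<^sub>m toep f0 + Gm * toep f0)" "k < dim_col (c \<cdot>\<^sub>m toep f0 + Gm * toep f0)"
  then have i: "i < N" and k: "k < N" by simp_all
  have L: "(c \<cdot>\<^sub>m toep f1 - Gm * toep f1) $$ (i, k) = c * toep f1 $$ (i, k) - (ev (bk i) * toep f1 $$ (i, k) + (if 0 < ps i then toep f1 $$ (i - 1, k) else 0))"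
    using Gamma_mult[OF toep_carrier i k, of f1] i k by simp
  have R: "(c \<cdot>\<^sub>m toep f0 + Gm * toep f0) $$ (i, k) = c * toep f0 $$ (i, k) + (ev (bk i) * toep f0 $$ (i, k) + (if 0 < ps i then toep f0 $$ (i - 1, k) else 0))"
    using Gamma_mult[OF toep_carrier i k, of f0] i k by simp
  show "(c \<cdot>\<^sub>m toep f1 - Gm * toep f1) $$ (i, k) = (c \<cdot>\<^sub>m toep f0 + Gm * toep f0) $$ (i, k)"
    unfolding L R toep_prev[OF i k]
    using sh[OF i, of "ps i - ps k"] i k by (auto simp: toep_entry algebra_simps)
qed simp_all

end

lemma exp_nth0:
  fixes f :: "complex \<Rightarrow> complex"
  assumes "f has_fps_expansion F" shows "fps_nth F 0 = f 0"
  using assms by (auto simp: has_fps_expansion_def eval_fps_at_0 dest: eventually_nhds_x_imp_x)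

lemma exp_unique:
  fixes f g :: "complex \<Rightarrow> complex"
  assumes "f has_fps_expansion F" "g has_fps_expansion G" "eventually (\<lambda>x. f x = g x) (nhds 0)"
  shows "F = G"
proof (rule fps_ext)
  fix d
  have "fps_nth F d = (deriv ^^ d) f 0 / fact d" by (rule fps_nth_fps_expansion[OF assms(1)])
  also have "(deriv ^^ d) f 0 = (deriv ^^ d) g 0" by (rule higher_deriv_cong_ev[OF assms(3) refl])
  also have "\<dots> / fact d = fps_nth G d" by (rule fps_nth_fps_expansion[OF assms(2), symmetric])
  finally show "fps_nth F d = fps_nth G d" .
qed

lemma exp_power:
  fixes f :: "complex \<Rightarrow> complex"
  assumes "f has_fps_expansion F" shows "(\<lambda>x. f x ^ k) has_fps_expansion F ^ k"
proof (induction k)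
  case 0 then show ?case by simp
next
  case (Suc k)
  have "(\<lambda>x. f x * f x ^ k) has_fps_expansion F * F ^ k"
    by (rule has_fps_expansion_mult[OF assms Suc])
  then show ?case by simp
qed

lemma exp_powi:
  fixes f :: "complex \<Rightarrow> complex"
  assumes "f has_fps_expansion F" "f 0 \<noteq> 0" shows "\<exists>H. (\<lambda>x. f x powi n) has_fps_expansion H"
proof (cases "n \<ge> 0")
  case True
  then have "(\<lambda>x. f x powi n) = (\<lambda>x. f x ^ nat n)" by (simp add: power_int_def)
  then show ?thesis using exp_power[OF assms(1)] by auto
next
  case False
  have inv: "(\<lambda>x. inverse (f x)) has_fps_expansion inverse F"
    by (rule has_fps_expansion_inverse[OF assms(1)]) (use exp_nth0[OF assms(1)] assms(2) in simp)
  have "(\<lambda>x. f x powi n) = (\<lambda>x. inverse (f x) ^ nat (- n))" using False by (simp add: power_int_def)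
  then show ?thesis using exp_power[OF inv] by auto
qed

lemma mobius_exp:
  fixes c k :: complex
  assumes "c - k \<noteq> 0"
  shows "\<exists>G. (\<lambda>x. (c + (k + x)) / (c - (k + x))) has_fps_expansion G"
proof -
  have n: "(\<lambda>x. (c + k) + x) has_fps_expansion fps_const (c + k) + fps_X"
    by (intro has_fps_expansion_add has_fps_expansion_const has_fps_expansion_fps_X)
  have d: "(\<lambda>x. (c - k) - x) has_fps_expansion fps_const (c - k) - fps_X"
    by (intro has_fps_expansion_diff has_fps_expansion_const has_fps_expansion_fps_X)
  have "(\<lambda>x. ((c + k) + x) / ((c - k) - x)) has_fps_expansion (fps_const (c + k) + fps_X) / (fps_const (c - k) - fps_X)"
    by (rule has_fps_expansion_divide'[OF n d]) (use assms in simp)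
  moreover have "(\<lambda>x. ((c + k) + x) / ((c - k) - x)) = (\<lambda>x. (c + (k + x)) / (c - (k + x)))"
    by (auto simp: algebra_simps)
  ultimately show ?thesis by auto
qed

lemma rho_exp:
  assumes "k \<noteq> p" "k \<noteq> - p" "k \<noteq> q" "k \<noteq> - q"
  shows "\<exists>F. (\<lambda>x. rho p q rho0 n m (k + x)) has_fps_expansion F"
proof -
  obtain G1 where G1: "(\<lambda>x. (p + (k + x)) / (p - (k + x))) has_fps_expansion G1"
    using mobius_exp[of p k] assms by auto
  obtain G2 where G2: "(\<lambda>x. (q + (k + x)) / (q - (k + x))) has_fps_expansion G2"
    using mobius_exp[of q k] assms by auto
  have nz1: "(p + (k + 0)) / (p - (k + 0)) \<noteq> 0" using assms by (auto simp: add_eq_0_iff)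
  have nz2: "(q + (k + 0)) / (q - (k + 0)) \<noteq> 0" using assms by (auto simp: add_eq_0_iff)
  obtain H1 where H1: "(\<lambda>x. ((p + (k + x)) / (p - (k + x))) powi n) has_fps_expansion H1"
    using exp_powi[OF G1, of n] nz1 by auto
  obtain H2 where H2: "(\<lambda>x. ((q + (k + x)) / (q - (k + x))) powi m) has_fps_expansion H2"
    using exp_powi[OF G2, of m] nz2 by auto
  have "(\<lambda>x. ((p + (k + x)) / (p - (k + x))) powi n * ((q + (k + x)) / (q - (k + x))) powi m * rho0)
      has_fps_expansion H1 * H2 * fps_const rho0"
    by (intro has_fps_expansion_mult H1 H2 has_fps_expansion_const)
  then show ?thesis unfolding rho_def by auto
qed

lemma drho_nth:
  assumes "(\<lambda>x. rho p q rho0 n m (k + x)) has_fps_expansion F"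
  shows "drho p q rho0 n m d k = fps_nth F d"
proof -
  have "drho p q rho0 n m d k = (deriv ^^ d) (rho p q rho0 n m \<circ> (\<lambda>x. k + x)) 0 / fact d"
    unfolding drho_def by (subst higher_deriv_shift_0) simp
  also have "\<dots> = fps_nth F d"
    using fps_nth_fps_expansion[OF assms, of d] by (simp add: o_def)
  finally show ?thesis .
qed

lemma rho_shift_n:
  assumes "k \<noteq> p" "k \<noteq> - p"
  shows "rho p q rho0 (n + 1) m k * (p - k) = (p + k) * rho p q rho0 n m k"
proof -
  define b where "b = (p + k) / (p - k)"
  have pk: "p - k \<noteq> 0" using assms by simp
  have "b \<noteq> 0" using assms by (auto simp: b_def add_eq_0_iff)
  then have "b powi (n + 1) = b powi n * b" by (simp add: power_int_add_1)
  moreover have "b * (p - k) = p + k" using pk by (simp add: b_def)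
  ultimately show ?thesis unfolding rho_def b_def[symmetric]
    by (metis (no_types, lifting) mult.assoc mult.commute)
qed

lemma rho_shift_m:
  assumes "k \<noteq> q" "k \<noteq> - q"
  shows "rho p q rho0 n (m + 1) k * (q - k) = (q + k) * rho p q rho0 n m k"
proof -
  define b where "b = (q + k) / (q - k)"
  have pk: "q - k \<noteq> 0" using assms by simp
  have "b \<noteq> 0" using assms by (auto simp: b_def add_eq_0_iff)
  then have "b powi (m + 1) = b powi m * b" by (simp add: power_int_add_1)
  moreover have "b * (q - k) = q + k" using pk by (simp add: b_def)
  ultimately show ?thesis unfolding rho_def b_def[symmetric]
    by (metis (no_types, lifting) mult.assoc mult.commute)
qed

lemma coeff_shift_lemma:
  fixes F1 F0 :: "complex fps" and c1 c2 :: complex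
  assumes "F1 * (fps_const c1 - fps_X) = (fps_const c2 + fps_X) * F0"
  shows "c1 * fps_nth F1 d - (if d = 0 then 0 else fps_nth F1 (d - 1)) =
         c2 * fps_nth F0 d + (if d = 0 then 0 else fps_nth F0 (d - 1))"
proof -
  have "fps_nth (F1 * (fps_const c1 - fps_X)) d = fps_nth ((fps_const c2 + fps_X) * F0) d"
    using assms by simp
  then show ?thesis by (simp add: algebra_simps)
qed

lemma drho_shift_n:
  assumes "k \<noteq> p" "k \<noteq> - p" "k \<noteq> q" "k \<noteq> - q"
  shows "(p - k) * drho p q rho0 (n + 1) m d k - (if d = 0 then 0 else drho p q rho0 (n + 1) m (d - 1) k)
       = (p + k) * drho p q rho0 n m d k + (if d = 0 then 0 else drho p q rho0 n m (d - 1) k)"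
proof -
  obtain F1 where F1: "(\<lambda>x. rho p q rho0 (n + 1) m (k + x)) has_fps_expansion F1" using rho_exp assms by blast
  obtain F0 where F0: "(\<lambda>x. rho p q rho0 n m (k + x)) has_fps_expansion F0" using rho_exp assms by blast
  have e1: "(\<lambda>x. rho p q rho0 (n + 1) m (k + x) * ((p - k) - x)) has_fps_expansion F1 * (fps_const (p - k) - fps_X)"
    by (intro has_fps_expansion_mult F1 has_fps_expansion_diff has_fps_expansion_const has_fps_expansion_fps_X)
  have e2: "(\<lambda>x. ((p + k) + x) * rho p q rho0 n m (k + x)) has_fps_expansion (fps_const (p + k) + fps_X) * F0"
    by (intro has_fps_expansion_mult F0 has_fps_expansion_add has_fps_expansion_const has_fps_expansion_fps_X)
  have t: "((\<lambda>x. k + x) \<longlongrightarrow> k) (nhds 0)"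
    using tendsto_add[OF tendsto_const[of k] filterlim_ident[of "nhds (0::complex)"]] by simp
  have ev: "eventually (\<lambda>x. k + x \<noteq> p \<and> k + x \<noteq> - p) (nhds 0)"
    using tendsto_imp_eventually_ne[OF t, of p] tendsto_imp_eventually_ne[OF t, of "- p"] assms
    by (auto intro: eventually_conj)
  have "eventually (\<lambda>x. rho p q rho0 (n + 1) m (k + x) * ((p - k) - x) = ((p + k) + x) * rho p q rho0 n m (k + x)) (nhds 0)"
    using ev
  proof eventually_elim
    case (elim x)
    then show ?case using rho_shift_n[of "k + x" p q rho0 n m] by (simp add: algebra_simps)
  qed
  from exp_unique[OF e1 e2 this] have "F1 * (fps_const (p - k) - fps_X) = (fps_const (p + k) + fps_X) * F0" .
  from coeff_shift_lemma[OF this, of d] show ?thesis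
    unfolding drho_nth[OF F1] drho_nth[OF F0] .
qed

lemma drho_shift_m:
  assumes "k \<noteq> p" "k \<noteq> - p" "k \<noteq> q" "k \<noteq> - q"
  shows "(q - k) * drho p q rho0 n (m + 1) d k - (if d = 0 then 0 else drho p q rho0 n (m + 1) (d - 1) k)
       = (q + k) * drho p q rho0 n m d k + (if d = 0 then 0 else drho p q rho0 n m (d - 1) k)"
proof -
  obtain F1 where F1: "(\<lambda>x. rho p q rho0 n (m + 1) (k + x)) has_fps_expansion F1" using rho_exp assms by blast
  obtain F0 where F0: "(\<lambda>x. rho p q rho0 n m (k + x)) has_fps_expansion F0" using rho_exp assms by blast
  have e1: "(\<lambda>x. rho p q rho0 n (m + 1) (k + x) * ((q - k) - x)) has_fps_expansion F1 * (fps_const (q - k) - fps_X)"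
    by (intro has_fps_expansion_mult F1 has_fps_expansion_diff has_fps_expansion_const has_fps_expansion_fps_X)
  have e2: "(\<lambda>x. ((q + k) + x) * rho p q rho0 n m (k + x)) has_fps_expansion (fps_const (q + k) + fps_X) * F0"
    by (intro has_fps_expansion_mult F0 has_fps_expansion_add has_fps_expansion_const has_fps_expansion_fps_X)
  have t: "((\<lambda>x. k + x) \<longlongrightarrow> k) (nhds 0)"
    using tendsto_add[OF tendsto_const[of k] filterlim_ident[of "nhds (0::complex)"]] by simp
  have ev: "eventually (\<lambda>x. k + x \<noteq> q \<and> k + x \<noteq> - q) (nhds 0)"
    using tendsto_imp_eventually_ne[OF t, of q] tendsto_imp_eventually_ne[OF t, of "- q"] assms
    by (auto intro: eventually_conj)
  have "eventually (\<lambda>x. rho p q rho0 n (m + 1) (k + x) * ((q - k) - x) = ((q + k) + x) * rho p q rho0 n m (k + x)) (nhds 0)"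
    using ev
  proof eventually_elim
    case (elim x)
    then show ?case using rho_shift_m[of "k + x" q p rho0 n m] by (simp add: algebra_simps)
  qed
  from exp_unique[OF e1 e2 this] have "F1 * (fps_const (q - k) - fps_X) = (fps_const (q + k) + fps_X) * F0" .
  from coeff_shift_lemma[OF this, of d] show ?thesis
    unfolding drho_nth[OF F1] drho_nth[OF F0] .
qed


lemma mat_inv_props: assumes P: "P \<in> carrier_mat n n" and inv: "invertible_mat P"
  shows "mat_inv P \<in> carrier_mat n n" "mat_inv P * P = 1\<^sub>m n" "P * mat_inv P = 1\<^sub>m n"
proof -
  from inv obtain B where B: "P * B = 1\<^sub>m (dim_row P)" "B * P = 1\<^sub>m (dim_row B)"
    unfolding invertible_mat_def inverts_mat_def by blast
  have "dim_col B = n" using arg_cong[OF B(1), of dim_col] P by simp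
  moreover have "dim_row B = n" using arg_cong[OF B(2), of dim_col] P by simp
  ultimately have ex: "\<exists>B. B \<in> carrier_mat n n \<and> B * P = 1\<^sub>m n \<and> P * B = 1\<^sub>m n"
    using B P by (intro exI[of _ B]) auto
  have "mat_inv P \<in> carrier_mat n n \<and> mat_inv P * P = 1\<^sub>m n \<and> P * mat_inv P = 1\<^sub>m n"
    unfolding mat_inv_def using P someI_ex[OF ex] by simp
  then show "mat_inv P \<in> carrier_mat n n" "mat_inv P * P = 1\<^sub>m n" "P * mat_inv P = 1\<^sub>m n" by auto
qed

lemma smult_mat_vec: assumes "A \<in> carrier_mat n n" "x \<in> carrier_vec n"
  shows "(c \<cdot>\<^sub>m A) *\<^sub>v x = c \<cdot>\<^sub>v (A *\<^sub>v (x :: complex vec))"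
  using assms by (intro eq_vecI) (auto simp: scalar_prod_def sum_distrib_left algebra_simps)

lemma scal_T: assumes "A \<in> carrier_mat n n" "x \<in> carrier_vec n" "y \<in> carrier_vec n"
  shows "x \<bullet> (A *\<^sub>v y) = (A\<^sup>T *\<^sub>v x) \<bullet> (y :: complex vec)"
  using transpose_vec_mult_scalar[OF assms(1) assms(3) assms(2)] by simp

lemma vec_eq_iff_idx: "v \<in> carrier_vec n \<Longrightarrow> w \<in> carrier_vec n \<Longrightarrow> v = w \<longleftrightarrow> (\<forall>i<n. v $ i = w $ i)"
  by auto


context
  fixes N :: nat and Gm G H :: "complex mat" and e :: "complex vec"
  assumes Gmc[simp]: "Gm \<in> carrier_mat N N" and Gc[simp]: "G \<in> carrier_mat N N"
    and Hc[simp]: "H \<in> carrier_mat N N" and ec[simp]: "e \<in> carrier_vec N"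
    and HGm: "H * Gm = Gm\<^sup>T * H" and HT: "H\<^sup>T = H" and GT: "G\<^sup>T = G"
    and syl: "Gm * G + G * Gm\<^sup>T = mat N N (\<lambda>(i, k). e $ i * e $ k)"
begin

lemma mvc[simp]: "A \<in> carrier_mat N N \<Longrightarrow> A *\<^sub>v x \<in> carrier_vec N" unfolding carrier_mat_def carrier_vec_def by simp
lemma ed[simp]: "dim_vec e = N" by (rule carrier_vecD[OF ec])
lemma mmc[simp]: "A \<in> carrier_mat N N \<Longrightarrow> B \<in> carrier_mat N N \<Longrightarrow> A * B \<in> carrier_mat N N" unfolding carrier_mat_def by simp
lemma mv_add: "A \<in> carrier_mat N N \<Longrightarrow> x \<in> carrier_vec N \<Longrightarrow> y \<in> carrier_vec N \<Longrightarrow> A *\<^sub>v (x + y) = A *\<^sub>v x + A *\<^sub>v y"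
  by (rule mult_add_distrib_mat_vec)
lemma mv_minus: "A \<in> carrier_mat N N \<Longrightarrow> x \<in> carrier_vec N \<Longrightarrow> y \<in> carrier_vec N \<Longrightarrow> A *\<^sub>v (x - y) = A *\<^sub>v x - A *\<^sub>v (y :: complex vec)"
  by (rule mult_minus_distrib_mat_vec)
lemma mv_smult: "A \<in> carrier_mat N N \<Longrightarrow> x \<in> carrier_vec N \<Longrightarrow> A *\<^sub>v (c \<cdot>\<^sub>v x) = c \<cdot>\<^sub>v (A *\<^sub>v (x :: complex vec))"
  by (rule mult_mat_vec)
lemma mv_madd: "A \<in> carrier_mat N N \<Longrightarrow> B \<in> carrier_mat N N \<Longrightarrow> x \<in> carrier_vec N \<Longrightarrow> (A + B) *\<^sub>v x = A *\<^sub>v x + B *\<^sub>v x"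
  by (rule add_mult_distrib_mat_vec)
lemma mv_mminus: "A \<in> carrier_mat N N \<Longrightarrow> B \<in> carrier_mat N N \<Longrightarrow> x \<in> carrier_vec N \<Longrightarrow> (A - B) *\<^sub>v x = A *\<^sub>v x - B *\<^sub>v (x :: complex vec)"
  by (rule minus_mult_distrib_mat_vec)
lemma mv_msmult: "A \<in> carrier_mat N N \<Longrightarrow> x \<in> carrier_vec N \<Longrightarrow> (c \<cdot>\<^sub>m A) *\<^sub>v x = c \<cdot>\<^sub>v (A *\<^sub>v (x :: complex vec))"
  by (rule smult_mat_vec)
lemma mv_mult: "A \<in> carrier_mat N N \<Longrightarrow> B \<in> carrier_mat N N \<Longrightarrow> x \<in> carrier_vec N \<Longrightarrow> (A * B) *\<^sub>v x = A *\<^sub>v (B *\<^sub>v x)"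
  by (rule assoc_mult_mat_vec)
lemma mv_one: "x \<in> carrier_vec N \<Longrightarrow> 1\<^sub>m N *\<^sub>v x = (x :: complex vec)" by simp

lemmas lin = mv_add mv_minus mv_smult mv_madd mv_mminus mv_msmult mv_mult

lemma HGm_v: assumes x: "x \<in> carrier_vec N" shows "H *\<^sub>v (Gm *\<^sub>v x) = Gm\<^sup>T *\<^sub>v (H *\<^sub>v x)"
proof -
  have "H *\<^sub>v (Gm *\<^sub>v x) = (H * Gm) *\<^sub>v x" by (rule mv_mult[symmetric]) (simp_all add: x)
  also have "\<dots> = (Gm\<^sup>T * H) *\<^sub>v x" by (simp add: HGm)
  also have "\<dots> = Gm\<^sup>T *\<^sub>v (H *\<^sub>v x)" by (rule mv_mult) (simp_all add: x)
  finally show ?thesis .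
qed

lemma syl_v: assumes x: "x \<in> carrier_vec N"
  shows "Gm *\<^sub>v (G *\<^sub>v x) + G *\<^sub>v (Gm\<^sup>T *\<^sub>v x) = (e \<bullet> x) \<cdot>\<^sub>v e"
proof -
  have "Gm *\<^sub>v (G *\<^sub>v x) + G *\<^sub>v (Gm\<^sup>T *\<^sub>v x) = (Gm * G + G * Gm\<^sup>T) *\<^sub>v x"
    using x by (simp add: lin)
  also have "\<dots> = mat N N (\<lambda>(i, k). e $ i * e $ k) *\<^sub>v x" by (simp add: syl)
  also have "\<dots> = (e \<bullet> x) \<cdot>\<^sub>v e"
    using x by (intro eq_vecI) (auto simp: scalar_prod_def sum_distrib_left algebra_simps mult_mat_vec_def)
  finally show ?thesis .
qed

definition "cv = H *\<^sub>v e"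
definition "PP L = 1\<^sub>m N + L * G * H"
definition "UU L = mat_inv (PP L)"
definition "uu L = UU L *\<^sub>v (L *\<^sub>v e)"
definition "ss L = cv \<bullet> uu L"
definition "XX L = cv \<bullet> (Gm *\<^sub>v uu L)"
definition "YY L = cv \<bullet> (UU L *\<^sub>v (Gm *\<^sub>v (L *\<^sub>v e)))"

lemma cv_c[simp]: "cv \<in> carrier_vec N" by (simp add: cv_def)

lemma e_H: "x \<in> carrier_vec N \<Longrightarrow> e \<bullet> (H *\<^sub>v x) = cv \<bullet> x"
  using scal_T[OF Hc ec, of x] HT by (simp add: cv_def)

context fixes L assumes Lc[simp]: "L \<in> carrier_mat N N" and Linv: "invertible_mat (PP L)"
begin

lemma PPc[simp]: "PP L \<in> carrier_mat N N" by (simp add: PP_def)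
lemma UUc[simp]: "UU L \<in> carrier_mat N N" "UU L * PP L = 1\<^sub>m N" "PP L * UU L = 1\<^sub>m N"
  using mat_inv_props[OF PPc Linv] by (simp_all add: UU_def)
lemma uuc[simp]: "uu L \<in> carrier_vec N" by (simp add: uu_def)

lemma PP_v: "x \<in> carrier_vec N \<Longrightarrow> PP L *\<^sub>v x = x + L *\<^sub>v (G *\<^sub>v (H *\<^sub>v x))"
  by (simp add: PP_def lin)

lemma PP_uu: "uu L + L *\<^sub>v (G *\<^sub>v (H *\<^sub>v uu L)) = L *\<^sub>v e"
proof -
  have "PP L *\<^sub>v uu L = (PP L * UU L) *\<^sub>v (L *\<^sub>v e)" unfolding uu_def by (rule mv_mult[symmetric]) simp_all
  then have "PP L *\<^sub>v uu L = L *\<^sub>v e" by simp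
  then show ?thesis using PP_v[OF uuc] by simp
qed

lemma UU_PP: "x \<in> carrier_vec N \<Longrightarrow> UU L *\<^sub>v (PP L *\<^sub>v x) = x"
proof -
  assume x: "x \<in> carrier_vec N"
  have "UU L *\<^sub>v (PP L *\<^sub>v x) = (UU L * PP L) *\<^sub>v x" using x by (rule mv_mult[symmetric, rotated 2]) simp_all
  then show ?thesis using x by simp
qed

end


lemma dimsGm[simp]: "dim_row Gm = N" "dim_col Gm = N" "dim_row G = N" "dim_col G = N" "dim_row H = N" "dim_col H = N"
  using carrier_matD[OF Gmc] carrier_matD[OF Gc] carrier_matD[OF Hc] by simp_all

lemma eqP:
  assumes L0c[simp]: "L0 \<in> carrier_mat N N" and L1c[simp]: "L1 \<in> carrier_mat N N"
    and inv0: "invertible_mat (PP L0)" and inv1: "invertible_mat (PP L1)"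
    and comm1: "Gm * L1 = L1 * Gm"
    and sh: "c \<cdot>\<^sub>m L1 - Gm * L1 = c \<cdot>\<^sub>m L0 + Gm * L0"
  shows "c * ss L0 + XX L0 - c * ss L1 + YY L1 = ss L1 * ss L0"
proof -
  have d01[simp]: "dim_row L0 = N" "dim_row L1 = N" "dim_col L0 = N" "dim_col L1 = N"
    using carrier_matD[OF L0c] carrier_matD[OF L1c] by simp_all
  have U1c[simp]: "UU L1 \<in> carrier_mat N N" using UUc[OF L1c inv1] by simp
  have u0c[simp]: "uu L0 \<in> carrier_vec N" using uuc[OF L0c inv0] .
  have u1c[simp]: "uu L1 \<in> carrier_vec N" using uuc[OF L1c inv1] .
  define u0 where "u0 = uu L0"
  define a0 where "a0 = H *\<^sub>v u0"
  define g where "g = G *\<^sub>v a0"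
  define s0 where "s0 = ss L0"
  define w where "w = c \<cdot>\<^sub>v u0 + Gm *\<^sub>v u0"
  have [simp]: "u0 \<in> carrier_vec N" "a0 \<in> carrier_vec N" "g \<in> carrier_vec N" "w \<in> carrier_vec N"
    by (simp_all add: u0_def a0_def g_def w_def)
  have [simp]: "dim_vec u0 = N" "dim_vec a0 = N" "dim_vec g = N" "dim_vec w = N"
    by (simp_all add: u0_def a0_def g_def w_def carrier_vecD[OF u0c])
  have sh_v: "c \<cdot>\<^sub>v (L1 *\<^sub>v x) - Gm *\<^sub>v (L1 *\<^sub>v x) = c \<cdot>\<^sub>v (L0 *\<^sub>v x) + Gm *\<^sub>v (L0 *\<^sub>v x)"
    if x: "x \<in> carrier_vec N" for x
  proof -
    have "(c \<cdot>\<^sub>m L1 - Gm * L1) *\<^sub>v x = (c \<cdot>\<^sub>m L0 + Gm * L0) *\<^sub>v x" by (simp add: sh)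
    then show ?thesis using x by (simp add: lin)
  qed
  have comm_v: "Gm *\<^sub>v (L1 *\<^sub>v x) = L1 *\<^sub>v (Gm *\<^sub>v x)" if x: "x \<in> carrier_vec N" for x
  proof -
    have "(Gm * L1) *\<^sub>v x = (L1 * Gm) *\<^sub>v x" by (simp add: comm1)
    then show ?thesis using x by (simp add: lin)
  qed
  have es0: "e \<bullet> a0 = s0" unfolding a0_def s0_def ss_def u0_def by (rule e_H) simp
  have S1: "H *\<^sub>v w = c \<cdot>\<^sub>v a0 + Gm\<^sup>T *\<^sub>v a0"
    unfolding w_def a0_def by (simp add: lin HGm_v)
  have syl0: "Gm *\<^sub>v g + G *\<^sub>v (Gm\<^sup>T *\<^sub>v a0) = s0 \<cdot>\<^sub>v e"
    using syl_v[of a0] es0 by (simp add: g_def)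
  have S2: "G *\<^sub>v (H *\<^sub>v w) = c \<cdot>\<^sub>v g - Gm *\<^sub>v g + s0 \<cdot>\<^sub>v e"
  proof (rule eq_vecI)
    fix i assume "i < dim_vec (c \<cdot>\<^sub>v g - Gm *\<^sub>v g + s0 \<cdot>\<^sub>v e)"
    then have i: "i < N" by simp
    have "(Gm *\<^sub>v g + G *\<^sub>v (Gm\<^sup>T *\<^sub>v a0)) $ i = (s0 \<cdot>\<^sub>v e) $ i" using syl0 by simp
    then have "(Gm *\<^sub>v g) $ i + (G *\<^sub>v (Gm\<^sup>T *\<^sub>v a0)) $ i = s0 * e $ i" using i by simp
    then show "(G *\<^sub>v (H *\<^sub>v w)) $ i = (c \<cdot>\<^sub>v g - Gm *\<^sub>v g + s0 \<cdot>\<^sub>v e) $ i"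
      unfolding S1 using i by (simp add: lin g_def algebra_simps)
  qed simp
  have PPu0: "u0 + L0 *\<^sub>v g = L0 *\<^sub>v e"
    using PP_uu[OF L0c inv0] by (simp add: u0_def a0_def g_def)
  have S3: "PP L1 *\<^sub>v w = c \<cdot>\<^sub>v (L1 *\<^sub>v e) - Gm *\<^sub>v (L1 *\<^sub>v e) + s0 \<cdot>\<^sub>v (L1 *\<^sub>v e)"
  proof (rule eq_vecI)
    fix i assume "i < dim_vec (c \<cdot>\<^sub>v (L1 *\<^sub>v e) - Gm *\<^sub>v (L1 *\<^sub>v e) + s0 \<cdot>\<^sub>v (L1 *\<^sub>v e))"
    then have i: "i < N" by simp
    have a: "(c \<cdot>\<^sub>v (L1 *\<^sub>v g) - Gm *\<^sub>v (L1 *\<^sub>v g)) $ i = (c \<cdot>\<^sub>v (L0 *\<^sub>v g) + Gm *\<^sub>v (L0 *\<^sub>v g)) $ i"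
      using sh_v[of g] by simp
    have b: "(c \<cdot>\<^sub>v (L1 *\<^sub>v e) - Gm *\<^sub>v (L1 *\<^sub>v e)) $ i = (c \<cdot>\<^sub>v (L0 *\<^sub>v e) + Gm *\<^sub>v (L0 *\<^sub>v e)) $ i"
      using sh_v[of e] by simp
    have cc: "(Gm *\<^sub>v (u0 + L0 *\<^sub>v g)) $ i = (Gm *\<^sub>v (L0 *\<^sub>v e)) $ i" using PPu0 by simp
    have dd: "(u0 + L0 *\<^sub>v g) $ i = (L0 *\<^sub>v e) $ i" using PPu0 by simp
    have ee: "L1 *\<^sub>v (Gm *\<^sub>v g) = Gm *\<^sub>v (L1 *\<^sub>v g)" using comm_v[of g] by simp
    have "u0 $ i + row L0 i \<bullet> g = row L0 i \<bullet> e" using dd i by simp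
    then have "c * (u0 $ i + row L0 i \<bullet> g) = c * (row L0 i \<bullet> e)" by simp
    then have dd2: "c * u0 $ i + c * (row L0 i \<bullet> g) = c * (row L0 i \<bullet> e)" by (simp add: distrib_left)
    show "(PP L1 *\<^sub>v w) $ i = (c \<cdot>\<^sub>v (L1 *\<^sub>v e) - Gm *\<^sub>v (L1 *\<^sub>v e) + s0 \<cdot>\<^sub>v (L1 *\<^sub>v e)) $ i"
      unfolding PP_v[OF L1c inv1 \<open>w \<in> carrier_vec N\<close>] S2
      using a b cc dd dd2 i by (simp add: lin ee w_def algebra_simps)
  qed (simp add: PP_def)
  have S4: "w = c \<cdot>\<^sub>v uu L1 - UU L1 *\<^sub>v (Gm *\<^sub>v (L1 *\<^sub>v e)) + s0 \<cdot>\<^sub>v uu L1"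
  proof -
    have "w = UU L1 *\<^sub>v (PP L1 *\<^sub>v w)" using UU_PP[OF L1c inv1, of w] by simp
    also have "\<dots> = c \<cdot>\<^sub>v uu L1 - UU L1 *\<^sub>v (Gm *\<^sub>v (L1 *\<^sub>v e)) + s0 \<cdot>\<^sub>v uu L1"
      unfolding S3 uu_def by (simp add: lin)
    finally show ?thesis .
  qed
  have "cv \<bullet> w = c * s0 + XX L0"
    unfolding w_def XX_def s0_def ss_def u0_def
    by (simp add: scalar_prod_add_distrib[of _ N] scalar_prod_smult_distrib[of _ N])
  moreover have "cv \<bullet> (c \<cdot>\<^sub>v uu L1 - UU L1 *\<^sub>v (Gm *\<^sub>v (L1 *\<^sub>v e)) + s0 \<cdot>\<^sub>v uu L1) = c * ss L1 - YY L1 + s0 * ss L1"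
    unfolding YY_def ss_def
    by (simp add: scalar_prod_add_distrib[of _ N] scalar_prod_minus_distrib[of _ N] scalar_prod_smult_distrib[of _ N])
  ultimately have "c * s0 + XX L0 = c * ss L1 - YY L1 + s0 * ss L1" using S4 by simp
  then show ?thesis unfolding s0_def by (simp add: algebra_simps)
qed


lemma mv_zero: "A \<in> carrier_mat N N \<Longrightarrow> A *\<^sub>v 0\<^sub>v N = (0\<^sub>v N :: complex vec)"
  by (intro eq_vecI) (auto simp: scalar_prod_def)

lemma symXY:
  assumes Lc[simp]: "L \<in> carrier_mat N N" and inv: "invertible_mat (PP L)"
    and comm: "Gm * L = L * Gm" and KT: "(H * L)\<^sup>T = H * L"
  shows "XX L = YY L"
proof -
  have dL[simp]: "dim_row L = N" "dim_col L = N" using carrier_matD[OF Lc] by simp_all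
  have Uc[simp]: "UU L \<in> carrier_mat N N" and UP: "UU L * PP L = 1\<^sub>m N" using UUc[OF Lc inv] by simp_all
  have Pc[simp]: "PP L \<in> carrier_mat N N" using PPc[OF Lc inv] .
  have dU[simp]: "dim_row (UU L) = N" "dim_col (UU L) = N" "dim_row (PP L) = N" "dim_col (PP L) = N"
    using carrier_matD[OF Uc] carrier_matD[OF Pc] by simp_all
  define u where "u = uu L"
  define v where "v = (UU L)\<^sup>T *\<^sub>v cv"
  define a where "a = H *\<^sub>v u"
  define b where "b = L\<^sup>T *\<^sub>v v"
  have [simp]: "u \<in> carrier_vec N" "v \<in> carrier_vec N" "a \<in> carrier_vec N" "b \<in> carrier_vec N"
    using uuc[OF Lc inv] by (simp_all add: u_def v_def a_def b_def)
  have [simp]: "dim_vec u = N" "dim_vec v = N" "dim_vec a = N" "dim_vec b = N"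
    using uuc[OF Lc inv] by (simp_all add: u_def v_def a_def b_def carrier_vecD)
  have comm_v: "Gm *\<^sub>v (L *\<^sub>v x) = L *\<^sub>v (Gm *\<^sub>v x)" if x: "x \<in> carrier_vec N" for x
  proof -
    have "(Gm * L) *\<^sub>v x = (L * Gm) *\<^sub>v x" by (simp add: comm)
    then show ?thesis using x by (simp add: lin)
  qed
  have KT_v: "H *\<^sub>v (L *\<^sub>v x) = L\<^sup>T *\<^sub>v (H *\<^sub>v x)" if x: "x \<in> carrier_vec N" for x
  proof -
    have "H *\<^sub>v (L *\<^sub>v x) = (H * L) *\<^sub>v x" using x by (simp add: lin)
    also have "\<dots> = (H * L)\<^sup>T *\<^sub>v x" by (simp add: KT)
    also have "\<dots> = (L\<^sup>T * H) *\<^sub>v x" using transpose_mult[OF Hc Lc] HT by simp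
    also have "\<dots> = L\<^sup>T *\<^sub>v (H *\<^sub>v x)" using x by (simp add: lin)
    finally show ?thesis .
  qed
  have F1: "cv \<bullet> (UU L *\<^sub>v z) = v \<bullet> z" if z: "z \<in> carrier_vec N" for z
    unfolding v_def by (rule scal_T[OF Uc cv_c z])
  have F2: "(PP L)\<^sup>T *\<^sub>v v = cv"
  proof -
    have "(PP L)\<^sup>T *\<^sub>v v = ((PP L)\<^sup>T * (UU L)\<^sup>T) *\<^sub>v cv" unfolding v_def by (simp add: lin)
    also have "(PP L)\<^sup>T * (UU L)\<^sup>T = (UU L * PP L)\<^sup>T" using transpose_mult[OF Uc Pc] by simp
    finally show ?thesis using UP by simp
  qed
  have PT: "(PP L)\<^sup>T *\<^sub>v x = x + H *\<^sub>v (G *\<^sub>v (L\<^sup>T *\<^sub>v x))" if x: "x \<in> carrier_vec N" for x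
  proof -
    have "(PP L)\<^sup>T = 1\<^sub>m N + H * (G * L\<^sup>T)"
      unfolding PP_def using transpose_add[of "1\<^sub>m N" N N "L * G * H"] transpose_mult[of "L * G" N N H N]
        transpose_mult[OF Lc Gc] HT GT by simp
    then show ?thesis using x by (simp add: lin)
  qed
  have Ru: "L *\<^sub>v e = u + L *\<^sub>v (G *\<^sub>v a)" using PP_uu[OF Lc inv] by (simp add: u_def a_def)
  have X1: "XX L = v \<bullet> (PP L *\<^sub>v (Gm *\<^sub>v u))"
    unfolding XX_def u_def[symmetric] F2[symmetric] using scal_T[OF Pc, of v "Gm *\<^sub>v u"] by simp
  have Y1: "YY L = v \<bullet> (Gm *\<^sub>v (L *\<^sub>v e))" unfolding YY_def by (rule F1) simp
  have X2: "PP L *\<^sub>v (Gm *\<^sub>v u) = Gm *\<^sub>v u + L *\<^sub>v (G *\<^sub>v (Gm\<^sup>T *\<^sub>v a))"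
    using PP_v[OF Lc inv, of "Gm *\<^sub>v u"] HGm_v[of u] by (simp add: a_def)
  have Y2: "Gm *\<^sub>v (L *\<^sub>v e) = Gm *\<^sub>v u + L *\<^sub>v (Gm *\<^sub>v (G *\<^sub>v a))"
    unfolding Ru by (simp add: lin comm_v)
  have XY: "XX L - YY L = b \<bullet> (G *\<^sub>v (Gm\<^sup>T *\<^sub>v a)) - b \<bullet> (Gm *\<^sub>v (G *\<^sub>v a))"
  proof -
    have "XX L - YY L = v \<bullet> (L *\<^sub>v (G *\<^sub>v (Gm\<^sup>T *\<^sub>v a))) - v \<bullet> (L *\<^sub>v (Gm *\<^sub>v (G *\<^sub>v a)))"
      unfolding X1 Y1 X2 Y2 by (simp add: scalar_prod_add_distrib[of _ N])
    also have "\<dots> = b \<bullet> (G *\<^sub>v (Gm\<^sup>T *\<^sub>v a)) - b \<bullet> (Gm *\<^sub>v (G *\<^sub>v a))"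
      unfolding b_def by (simp add: scal_T[OF Lc])
    finally show ?thesis .
  qed
  \<comment> \<open>a and b solve the same equation\<close>
  have Ka: "a + H *\<^sub>v (L *\<^sub>v (G *\<^sub>v a)) = H *\<^sub>v (L *\<^sub>v e)"
    unfolding Ru a_def by (simp add: lin)
  have Kb: "b + H *\<^sub>v (L *\<^sub>v (G *\<^sub>v b)) = H *\<^sub>v (L *\<^sub>v e)"
  proof -
    have "b + H *\<^sub>v (L *\<^sub>v (G *\<^sub>v b)) = L\<^sup>T *\<^sub>v v + L\<^sup>T *\<^sub>v (H *\<^sub>v (G *\<^sub>v b))"
      by (simp add: KT_v b_def)
    also have "\<dots> = L\<^sup>T *\<^sub>v ((PP L)\<^sup>T *\<^sub>v v)"
      by (simp add: PT lin b_def)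
    also have "\<dots> = H *\<^sub>v (L *\<^sub>v e)" unfolding F2 cv_def by (simp add: KT_v)
    finally show ?thesis .
  qed
  define d where "d = a - b"
  have [simp]: "d \<in> carrier_vec N" "dim_vec d = N" by (simp_all add: d_def)
  have Kd: "d + H *\<^sub>v (L *\<^sub>v (G *\<^sub>v d)) = 0\<^sub>v N"
  proof (rule eq_vecI)
    fix i assume "i < dim_vec (0\<^sub>v N :: complex vec)" then have i: "i < N" by simp
    have "(a + H *\<^sub>v (L *\<^sub>v (G *\<^sub>v a))) $ i = (b + H *\<^sub>v (L *\<^sub>v (G *\<^sub>v b))) $ i" using Ka Kb by simp
    then show "(d + H *\<^sub>v (L *\<^sub>v (G *\<^sub>v d))) $ i = 0\<^sub>v N $ i"
      using i unfolding d_def by (simp add: lin algebra_simps)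
  qed simp
  define y where "y = L *\<^sub>v (G *\<^sub>v d)"
  have [simp]: "y \<in> carrier_vec N" by (simp add: y_def)
  have "PP L *\<^sub>v y = y + L *\<^sub>v (G *\<^sub>v (H *\<^sub>v y))" by (rule PP_v[OF Lc inv]) simp
  also have "\<dots> = L *\<^sub>v (G *\<^sub>v (d + H *\<^sub>v (L *\<^sub>v (G *\<^sub>v d))))"
    unfolding y_def by (simp add: lin)
  finally have "PP L *\<^sub>v y = L *\<^sub>v (G *\<^sub>v (d + H *\<^sub>v (L *\<^sub>v (G *\<^sub>v d))))" .
  then have "PP L *\<^sub>v y = 0\<^sub>v N" unfolding Kd by (simp add: mv_zero)
  then have "y = 0\<^sub>v N" using UU_PP[OF Lc inv, of y] by (simp add: mv_zero)
  then have "d = 0\<^sub>v N"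
  proof -
    assume y0: "y = 0\<^sub>v N"
    show "d = 0\<^sub>v N"
    proof (rule eq_vecI)
      fix i assume "i < dim_vec (0\<^sub>v N :: complex vec)" then have i: "i < N" by simp
      have "(d + H *\<^sub>v y) $ i = 0" using Kd i by (simp add: y_def)
      then show "d $ i = 0\<^sub>v N $ i" using i y0 by (simp add: mv_zero)
    qed simp
  qed
  then have ab: "a = b"
  proof -
    assume "d = 0\<^sub>v N"
    show "a = b"
    proof (rule eq_vecI)
      fix i assume "i < dim_vec b" then have i: "i < N" by simp
      have "d $ i = 0" using \<open>d = 0\<^sub>v N\<close> i by simp
      then show "a $ i = b $ i" using i by (simp add: d_def)
    qed simp
  qed
  have "b \<bullet> (G *\<^sub>v (Gm\<^sup>T *\<^sub>v b)) = (G *\<^sub>v b) \<bullet> (Gm\<^sup>T *\<^sub>v b)"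
    using scal_T[OF Gc, of b "Gm\<^sup>T *\<^sub>v b"] GT by simp
  also have "\<dots> = (Gm\<^sup>T *\<^sub>v b) \<bullet> (G *\<^sub>v b)" by (rule comm_scalar_prod[of _ N]) simp_all
  also have "\<dots> = b \<bullet> (Gm *\<^sub>v (G *\<^sub>v b))" using scal_T[OF Gmc, of b "G *\<^sub>v b"] by simp
  finally show ?thesis using XY ab by simp
qed


lemma alg_lpkdv:
  fixes s s1 s2 s3 X Y1 Y2 Y3 p q :: complex
  assumes D1: "p * s + X - p * s1 + Y1 = s1 * s" and D2: "q * s + X - q * s2 + Y2 = s2 * s"
    and D3: "p * s2 + Y2 - p * s3 + Y3 = s3 * s2" and D4: "q * s1 + Y1 - q * s3 + Y3 = s3 * s1"
  shows "(p + q + s - s3) * (p - q + s2 - s1) = p\<^sup>2 - q\<^sup>2"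
proof -
  have "(p + q + s - s3) * (p - q + s2 - s1) - (p\<^sup>2 - q\<^sup>2) =
    ((p * s2 + Y2 - p * s3 + Y3) - s3 * s2) - ((q * s1 + Y1 - q * s3 + Y3) - s3 * s1)
    - (((q * s + X - q * s2 + Y2) - s2 * s) - ((p * s + X - p * s1 + Y1) - s1 * s))"
    by (simp add: algebra_simps power2_eq_square)
  then show ?thesis using D1 D2 D3 D4 by simp
qed

lemma lpkdv_abs:
  fixes L :: "int \<Rightarrow> int \<Rightarrow> complex mat" and p q :: complex
  assumes Lc: "\<And>n m. L n m \<in> carrier_mat N N"
    and inv: "\<And>n m. invertible_mat (PP (L n m))"
    and comm: "\<And>n m. Gm * L n m = L n m * Gm"
    and KT: "\<And>n m. (H * L n m)\<^sup>T = H * L n m"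
    and shp: "\<And>n m. p \<cdot>\<^sub>m L (n + 1) m - Gm * L (n + 1) m = p \<cdot>\<^sub>m L n m + Gm * L n m"
    and shq: "\<And>n m. q \<cdot>\<^sub>m L n (m + 1) - Gm * L n (m + 1) = q \<cdot>\<^sub>m L n m + Gm * L n m"
  shows "(p + q + ss (L n m) - ss (L (n + 1) (m + 1))) * (p - q + ss (L n (m + 1)) - ss (L (n + 1) m)) = p\<^sup>2 - q\<^sup>2"
proof -
  have S: "XX (L a b) = YY (L a b)" for a b by (rule symXY[OF Lc inv comm KT])
  have E1: "p * ss (L n m) + XX (L n m) - p * ss (L (n + 1) m) + YY (L (n + 1) m) = ss (L (n + 1) m) * ss (L n m)"
    by (rule eqP[OF Lc Lc inv inv comm shp])
  have E2: "q * ss (L n m) + XX (L n m) - q * ss (L n (m + 1)) + YY (L n (m + 1)) = ss (L n (m + 1)) * ss (L n m)"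
    by (rule eqP[OF Lc Lc inv inv comm shq])
  have E3: "p * ss (L n (m + 1)) + XX (L n (m + 1)) - p * ss (L (n + 1) (m + 1)) + YY (L (n + 1) (m + 1)) = ss (L (n + 1) (m + 1)) * ss (L n (m + 1))"
    by (rule eqP[OF Lc Lc inv inv comm shp])
  have E4: "q * ss (L (n + 1) m) + XX (L (n + 1) m) - q * ss (L (n + 1) (m + 1)) + YY (L (n + 1) (m + 1)) = ss (L (n + 1) (m + 1)) * ss (L (n + 1) m)"
    by (rule eqP[OF Lc Lc inv inv comm shq])
  show ?thesis
    by (rule alg_lpkdv[OF E1 E2 E3[unfolded S[of n "m + 1"]] E4[unfolded S[of "n + 1" m]]])
qed

end


lemma shift_left_mult:
  fixes A F1 F0 Gm :: "complex mat"
  assumes c: "A \<in> carrier_mat n n" "F1 \<in> carrier_mat n n" "F0 \<in> carrier_mat n n" "Gm \<in> carrier_mat n n"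
    and comm: "Gm * A = A * Gm"
    and sh: "k \<cdot>\<^sub>m F1 - Gm * F1 = k \<cdot>\<^sub>m F0 + Gm * F0"
  shows "k \<cdot>\<^sub>m (A * F1) - Gm * (A * F1) = k \<cdot>\<^sub>m (A * F0) + Gm * (A * F0)"
proof -
  have e1: "Gm * (A * F1) = A * (Gm * F1)" "Gm * (A * F0) = A * (Gm * F0)"
    using c by (simp_all add: assoc_mult_mat[symmetric, of Gm n n A n] comm)
  have "k \<cdot>\<^sub>m (A * F1) - Gm * (A * F1) = A * (k \<cdot>\<^sub>m F1 - Gm * F1)"
    using c by (simp add: e1 mult_minus_distrib_mat[of A n n "k \<cdot>\<^sub>m F1" n "Gm * F1"] mult_smult_distrib[of A n n F1 n])
  also have "\<dots> = A * (k \<cdot>\<^sub>m F0 + Gm * F0)" by (simp add: sh)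
  also have "\<dots> = k \<cdot>\<^sub>m (A * F0) + Gm * (A * F0)"
    using c by (simp add: e1 mult_add_distrib_mat[of A n n "k \<cdot>\<^sub>m F0" n "Gm * F0"] mult_smult_distrib[of A n n F0 n])
  finally show ?thesis .
qed

theorem mainTheorem8:
  fixes p q rho0 :: complex
    and ks :: "complex list"              \<comment> \<open>k_1, ..., k_N1\<close>
    and js :: "(complex \<times> nat) list"     \<comment> \<open>(kappa_j, N_j), j = 2..s\<close>
    and a :: "nat \<Rightarrow> nat \<Rightarrow> complex"    \<comment> \<open>first columns of the Toeplitz blocks A_j\<close>
    and c :: "complex vec"
  assumes sizes: "\<forall>b \<in> set js. snd b \<ge> 1"
    and c_dim: "dim_vec c = dimN ks js"
    and eig_sum: "\<forall>la mu. eigenvalue (Gamma_mat ks js) la \<longrightarrow> eigenvalue (Gamma_mat ks js) mu \<longrightarrow> la + mu \<noteq> 0"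
    and pq: "\<forall>la. eigenvalue (Gamma_mat ks js) la \<longrightarrow> p \<noteq> la \<and> p \<noteq> - la \<and> q \<noteq> la \<and> q \<noteq> - la"
    and inv: "\<forall>n m :: int. invertible_mat (1\<^sub>m (dimN ks js) + M_mat p q rho0 a c ks js n m)"
  shows "\<forall>n m :: int.
    (p + q + w_fun p q rho0 a c ks js n m - w_fun p q rho0 a c ks js (n + 1) (m + 1)) *
    (p - q + w_fun p q rho0 a c ks js n (m + 1) - w_fun p q rho0 a c ks js (n + 1) m) = p\<^sup>2 - q\<^sup>2"
proof (intro allI)
  fix n m :: int
  define NN where "NN = dimN ks js"
  define Gm where "Gm = Gamma_mat ks js"
  define GG where "GG = G_mat ks js"
  define HH where "HH = H_mat c ks js"
  define ee where "ee = evec ks js"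
  define AA where "AA = A_mat a ks js"
  define LL where "LL = (\<lambda>n m. AA * F_mat p q rho0 ks js n m)"
  define ta where "ta = (\<lambda>b d. if b < length ks then (if d = 0 then 1 else 0) else a (b - length ks) (d::nat))"
  have AA_t: "AA = toep ks js ta" unfolding AA_def ta_def by (rule A_toep)
  have HH_h: "HH = hank ks js (\<lambda>b d. c $ (bstart ks js b + d))" unfolding HH_def by (rule H_hank)
  have eigv: "i < NN \<Longrightarrow> eigenvalue Gm (eig ks js (blk ks js i))" for i
    unfolding NN_def Gm_def by (rule eig_eigenvalue)
  have Gmc: "Gm \<in> carrier_mat NN NN" unfolding Gm_def NN_def by simp
  have GGc: "GG \<in> carrier_mat NN NN" unfolding GG_def NN_def by simp
  have HHc: "HH \<in> carrier_mat NN NN" unfolding HH_h NN_def by simp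
  have eec: "ee \<in> carrier_vec NN" unfolding ee_def NN_def by simp
  have AAc: "AA \<in> carrier_mat NN NN" unfolding AA_t NN_def by simp
  have Fc: "F_mat p q rho0 ks js n' m' \<in> carrier_mat NN NN" for n' m'
    unfolding F_toep NN_def by simp
  have LLc: "LL n' m' \<in> carrier_mat NN NN" for n' m' unfolding LL_def using AAc Fc by auto
  have HGm: "HH * Gm = Gm\<^sup>T * HH" unfolding HH_h Gm_def by (rule hank_Gamma)
  have HT: "HH\<^sup>T = HH" unfolding HH_h by (rule hank_sym)
  have GT: "GG\<^sup>T = GG" unfolding GG_def by (rule G_sym)
  have syl: "Gm * GG + GG * Gm\<^sup>T = mat NN NN (\<lambda>(i, k). ee $ i * ee $ k)"
  proof -
    have "Gm * GG + GG * Gm\<^sup>T = Emat ks js" unfolding Gm_def GG_def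
    proof (rule G_sylvester)
      fix i k assume "i < dimN ks js" "k < dimN ks js"
      then show "eig ks js (blk ks js i) + eig ks js (blk ks js k) \<noteq> 0"
        using eig_sum eigv[of i] eigv[of k] by (simp add: NN_def Gm_def)
    qed
    then show ?thesis unfolding Emat_evec ee_def NN_def .
  qed
  have commA: "Gm * AA = AA * Gm" unfolding AA_t Gm_def by (rule toep_comm)
  have commF: "Gm * F_mat p q rho0 ks js n' m' = F_mat p q rho0 ks js n' m' * Gm" for n' m'
    unfolding F_toep Gm_def by (rule toep_comm)
  have comm: "Gm * LL n' m' = LL n' m' * Gm" for n' m'
  proof -
    have "Gm * LL n' m' = (Gm * AA) * F_mat p q rho0 ks js n' m'"
      unfolding LL_def using Gmc AAc Fc by (simp add: assoc_mult_mat[of Gm NN NN AA NN "F_mat p q rho0 ks js n' m'" NN])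
    also have "\<dots> = AA * (Gm * F_mat p q rho0 ks js n' m')"
      unfolding commA using Gmc AAc Fc by (simp add: assoc_mult_mat[of AA NN NN Gm NN "F_mat p q rho0 ks js n' m'" NN])
    also have "\<dots> = LL n' m' * Gm"
      unfolding commF LL_def using Gmc AAc Fc by (simp add: assoc_mult_mat[of AA NN NN "F_mat p q rho0 ks js n' m'" NN Gm NN])
    finally show ?thesis .
  qed
  have KT: "(HH * LL n' m')\<^sup>T = HH * LL n' m'" for n' m'
  proof -
    have "HH * LL n' m' = (HH * AA) * F_mat p q rho0 ks js n' m'"
      unfolding LL_def using HHc AAc Fc by (simp add: assoc_mult_mat[of HH NN NN AA NN "F_mat p q rho0 ks js n' m'" NN])
    then show ?thesis unfolding HH_h AA_t F_toep hank_toep by (rule ssubst) (rule hank_sym)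
  qed
  have eig_ne: "i < NN \<Longrightarrow> eig ks js (blk ks js i) \<noteq> p \<and> eig ks js (blk ks js i) \<noteq> - p \<and> eig ks js (blk ks js i) \<noteq> q \<and> eig ks js (blk ks js i) \<noteq> - q" for i
    using pq eigv[of i] unfolding Gm_def by auto
  have shp: "p \<cdot>\<^sub>m LL (n' + 1) m' - Gm * LL (n' + 1) m' = p \<cdot>\<^sub>m LL n' m' + Gm * LL n' m'" for n' m'
    unfolding LL_def
  proof (rule shift_left_mult[OF AAc Fc Fc Gmc commA])
    show "p \<cdot>\<^sub>m F_mat p q rho0 ks js (n' + 1) m' - Gm * F_mat p q rho0 ks js (n' + 1) m' =
          p \<cdot>\<^sub>m F_mat p q rho0 ks js n' m' + Gm * F_mat p q rho0 ks js n' m'"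
      unfolding F_toep Gm_def
      by (rule toep_shift, rule drho_shift_n) (use eig_ne in \<open>auto simp: NN_def\<close>)
  qed
  have shq: "q \<cdot>\<^sub>m LL n' (m' + 1) - Gm * LL n' (m' + 1) = q \<cdot>\<^sub>m LL n' m' + Gm * LL n' m'" for n' m'
    unfolding LL_def
  proof (rule shift_left_mult[OF AAc Fc Fc Gmc commA])
    show "q \<cdot>\<^sub>m F_mat p q rho0 ks js n' (m' + 1) - Gm * F_mat p q rho0 ks js n' (m' + 1) =
          q \<cdot>\<^sub>m F_mat p q rho0 ks js n' m' + Gm * F_mat p q rho0 ks js n' m'"
      unfolding F_toep Gm_def
      by (rule toep_shift, rule drho_shift_m) (use eig_ne in \<open>auto simp: NN_def\<close>)
  qed
  have invL: "invertible_mat (1\<^sub>m NN + LL n' m' * GG * HH)" for n' m'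
    using inv unfolding LL_def GG_def HH_def AA_def NN_def M_mat_def by simp
  have invPP: "invertible_mat (PP NN GG HH (LL n' m'))" for n' m'
    using invL[of n' m'] by (simp add: PP_def[OF Gmc GGc HHc eec HGm HT GT syl])
  have wf: "w_fun p q rho0 a c ks js n' m' = (HH *\<^sub>v ee) \<bullet> (mat_inv (1\<^sub>m NN + LL n' m' * GG * HH) *\<^sub>v (LL n' m' *\<^sub>v ee))" for n' m'
  proof -
    have c_eq: "c = HH *\<^sub>v ee" unfolding HH_def ee_def by (rule c_hank[OF sizes c_dim])
    have r_eq: "A_mat a ks js *\<^sub>v r_vec p q rho0 ks js n' m' = LL n' m' *\<^sub>v ee"
      unfolding r_toep LL_def AA_def[symmetric] ee_def[symmetric]
      by (rule assoc_mult_mat_vec[symmetric, of AA NN NN _ NN]) (use AAc Fc eec in simp_all)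
    have "w_fun p q rho0 a c ks js n' m' = c \<bullet> (mat_inv (1\<^sub>m NN + LL n' m' * GG * HH) *\<^sub>v (LL n' m' *\<^sub>v ee))"
      unfolding w_fun_def M_mat_def r_eq by (simp add: LL_def GG_def HH_def AA_def NN_def)
    then show ?thesis by (simp add: c_eq[symmetric])
  qed
  show "(p + q + w_fun p q rho0 a c ks js n m - w_fun p q rho0 a c ks js (n + 1) (m + 1)) *
    (p - q + w_fun p q rho0 a c ks js n (m + 1) - w_fun p q rho0 a c ks js (n + 1) m) = p\<^sup>2 - q\<^sup>2"
    using lpkdv_abs[where N=NN and Gm=Gm and G=GG and H=HH and e=ee and L=LL and p=p and q=q and n=n and m=m,
        OF Gmc GGc HHc eec HGm HT GT syl LLc invPP comm KT shp shq]
    unfolding wf by (simp add: ss_def[OF Gmc GGc HHc eec HGm HT GT syl] uu_def[OF Gmc GGc HHc eec HGm HT GT syl]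
      UU_def[OF Gmc GGc HHc eec HGm HT GT syl] PP_def[OF Gmc GGc HHc eec HGm HT GT syl] cv_def[OF Gmc GGc HHc eec HGm HT GT syl])
qed

end
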